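(* Let $n\geq 7$ and $3\leq \Delta\leq n-2$ be integers, and let $T$ be a tree with $n$ vertices and maximum degree $\Delta$. (i) If $3\leq\Delta\leq\lfloor\frac{n-1}{2}\rfloor$, then $$SO(T)\geq \Delta\sqrt{\Delta^2+4}+\sqrt{8}\,(n-2\Delta-1)+\sqrt{5}\,\Delta,$$ with equality if and only if $T$ is isomorphic to a tree $T_\Delta$, i.e. a spider with exactly $\Delta$ legs, each leg of length at least $2$. (ii) If $\lfloor\frac{n-1}{2}\rfloor<\Delta\leq n-2$, then $$SO(T)\geq (n-\Delta-1)\sqrt{\Delta^2+4}+(2\Delta-n+1)\sqrt{\Delta^2+1}+\sqrt{5}\,(n-\Delta-1),$$ with equality if and only if $T\cong T_{n,\Delta}$, where $T_{n,\Delta}$ is the tree obtained from the star $K_{1,\Delta}$ (with $\Delta+1$ vertices) by attaching one pendant edge to each of $n-\Delta-1$ of its leaves.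
   Context: All graphs are finite, simple and undirected; $d_G(v)$ denotes the degree of a vertex $v$ in $G$. The Sombor index of a graph $G$ is $SO(G)=\sum_{uv\in E(G)}\sqrt{d_G(u)^2+d_G(v)^2}$. A spider is a tree with at most one vertex of degree greater than two; this vertex is the hub, and a leg is a path from the hub to a leaf; the length of a leg is its number of edges. *)

theory Defs
  imports Complex_Main
begin

definition simple_graph :: "'a set \<Rightarrow> 'a set set \<Rightarrow> bool" where
  "simple_graph V E \<longleftrightarrow> finite V \<and>
     (\<forall>e\<in>E. \<exists>u v. u \<in> V \<and> v \<in> V \<and> u \<noteq> v \<and> e = {u, v})"

definition degree :: "'a set set \<Rightarrow> 'a \<Rightarrow> nat" where
  "degree E v = card {e \<in> E. v \<in> e}"

definition max_degree :: "'a set \<Rightarrow> 'a set set \<Rightarrow> nat" where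
  "max_degree V E = Max (degree E ` V)"

definition is_path :: "'a set \<Rightarrow> 'a set set \<Rightarrow> 'a list \<Rightarrow> bool" where
  "is_path V E p \<longleftrightarrow> p \<noteq> [] \<and> distinct p \<and> set p \<subseteq> V \<and>
     (\<forall>i. Suc i < length p \<longrightarrow> {p ! i, p ! Suc i} \<in> E)"

definition connected_graph :: "'a set \<Rightarrow> 'a set set \<Rightarrow> bool" where
  "connected_graph V E \<longleftrightarrow>
     (\<forall>u\<in>V. \<forall>v\<in>V. \<exists>p. is_path V E p \<and> hd p = u \<and> last p = v)"

definition has_cycle :: "'a set \<Rightarrow> 'a set set \<Rightarrow> bool" where
  "has_cycle V E \<longleftrightarrow> (\<exists>p. is_path V E p \<and> length p \<ge> 3 \<and> {last p, hd p} \<in> E)"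

definition is_tree :: "'a set \<Rightarrow> 'a set set \<Rightarrow> bool" where
  "is_tree V E \<longleftrightarrow> simple_graph V E \<and> V \<noteq> {} \<and> connected_graph V E \<and> \<not> has_cycle V E"

definition sombor :: "'a set \<Rightarrow> 'a set set \<Rightarrow> real" where
  "sombor V E = (\<Sum>e\<in>E. sqrt (\<Sum>v\<in>e. (real (degree E v))\<^sup>2))"

definition spider :: "'a set \<Rightarrow> 'a set set \<Rightarrow> bool" where
  "spider V E \<longleftrightarrow> is_tree V E \<and> card {v \<in> V. degree E v > 2} \<le> 1"

text \<open>Legs at hub h: paths from h to a leaf (length of a leg = number of edges
  = length of the list minus one).\<close>
definition legs :: "'a set \<Rightarrow> 'a set set \<Rightarrow> 'a \<Rightarrow> 'a list set" where
  "legs V E h = {p. is_path V E p \<and> length p \<ge> 2 \<and> hd p = h \<and> degree E (last p) = 1}"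

definition spider_long_legs :: "'a set \<Rightarrow> 'a set set \<Rightarrow> nat \<Rightarrow> bool" where
  "spider_long_legs V E k \<longleftrightarrow> spider V E \<and>
     (\<exists>h\<in>V. degree E h > 2 \<and> card (legs V E h) = k \<and>
        (\<forall>p\<in>legs V E h. length p - 1 \<ge> 2))"

definition graph_iso :: "'a set \<Rightarrow> 'a set set \<Rightarrow> 'b set \<Rightarrow> 'b set set \<Rightarrow> bool" where
  "graph_iso V1 E1 V2 E2 \<longleftrightarrow> (\<exists>f. bij_betw f V1 V2 \<and>
     (\<forall>u\<in>V1. \<forall>v\<in>V1. {u, v} \<in> E1 \<longleftrightarrow> {f u, f v} \<in> E2))"

text \<open>T_{n,Delta}: star K_{1,Delta} with centre 0 and leaves 1..Delta, plus pendant
  vertices Delta+1..n-1, vertex i attached to leaf i-Delta.\<close>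
definition T_nD_V :: "nat \<Rightarrow> nat \<Rightarrow> nat set" where
  "T_nD_V n D = {..<n}"

definition T_nD_E :: "nat \<Rightarrow> nat \<Rightarrow> nat set set" where
  "T_nD_E n D = {{0, i} | i. 1 \<le> i \<and> i \<le> D} \<union> {{i - D, i} | i. D < i \<and> i < n}"

end

theory Submission
  imports Defs
begin

definition nbr :: "'a set \<Rightarrow> 'a set set \<Rightarrow> 'a \<Rightarrow> 'a set" where
  "nbr V E v = {u\<in>V. {v,u} \<in> E}"

lemma sg_edge: "simple_graph V E \<Longrightarrow> e \<in> E \<Longrightarrow> \<exists>u v. u \<in> V \<and> v \<in> V \<and> u \<noteq> v \<and> e = {u, v}"
  unfolding simple_graph_def by blast

lemma sg_edge2: "simple_graph V E \<Longrightarrow> {a,b} \<in> E \<Longrightarrow> a \<in> V \<and> b \<in> V \<and> a \<noteq> b"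
proof -
  assume s: "simple_graph V E" and e: "{a,b} \<in> E"
  then obtain u v where "u \<in> V" "v \<in> V" "u \<noteq> v" "{a,b} = {u,v}" unfolding simple_graph_def by blast
  then show ?thesis by (auto simp: doubleton_eq_iff)
qed

lemma sg_finV: "simple_graph V E \<Longrightarrow> finite V"
  unfolding simple_graph_def by simp

lemma sg_finE: assumes s: "simple_graph V E" shows "finite E"
proof -
  have "E \<subseteq> Pow V" using sg_edge[OF s] by blast
  moreover have "finite V" using s unfolding simple_graph_def by simp
  ultimately show ?thesis by (simp add: finite_subset)
qed

lemma edges_at: assumes s: "simple_graph V E" shows "{e\<in>E. v\<in>e} = (\<lambda>u. {v,u}) ` nbr V E v"
proof
  show "{e\<in>E. v\<in>e} \<subseteq> (\<lambda>u. {v,u}) ` nbr V E v"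
  proof
    fix e assume "e \<in> {e\<in>E. v\<in>e}"
    then have e: "e \<in> E" "v \<in> e" by auto
    then obtain a b where ab: "a \<in> V" "b \<in> V" "e = {a,b}" using sg_edge[OF s] by blast
    show "e \<in> (\<lambda>u. {v,u}) ` nbr V E v"
    proof (cases "v = a")
      case True then show ?thesis using ab e unfolding nbr_def by auto
    next
      case False then have "v = b" using ab e by auto
      then show ?thesis using ab e unfolding nbr_def by (auto simp: insert_commute)
    qed
  qed
  show "(\<lambda>u. {v,u}) ` nbr V E v \<subseteq> {e\<in>E. v\<in>e}" unfolding nbr_def by auto
qed

lemma inj_at: "inj_on (\<lambda>u. {v,u}) (nbr V E v)"
  unfolding inj_on_def by (simp add: doubleton_eq_iff)

lemma degree_nbr: assumes s: "simple_graph V E" shows "degree E v = card (nbr V E v)"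
  unfolding degree_def edges_at[OF s] by (rule card_image[OF inj_at])

lemma fin_nbr: assumes s: "simple_graph V E" shows "finite (nbr V E v)"
  unfolding nbr_def using sg_finV[OF s] by simp

lemma nbr_sym: "u \<in> nbr V E v \<Longrightarrow> v \<in> V \<Longrightarrow> v \<in> nbr V E u"
  unfolding nbr_def by (simp add: insert_commute)

lemma nbr_edge: "u \<in> nbr V E v \<longleftrightarrow> u \<in> V \<and> {v,u} \<in> E"
  unfolding nbr_def by simp


lemma sum_edges_swap:
  assumes s: "simple_graph V E"
  shows "(\<Sum>e\<in>E. \<Sum>v\<in>e. H v e) = (\<Sum>v\<in>V. \<Sum>u\<in>nbr V E v. H v {v,u})"
proof -
  have fE: "finite E" using sg_finE[OF s] .
  have fV: "finite V" using sg_finV[OF s] .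
  have 1: "\<And>e. e \<in> E \<Longrightarrow> {v\<in>V. v \<in> e} = e" using sg_edge[OF s] by blast
  have "(\<Sum>e\<in>E. \<Sum>v\<in>e. H v e) = (\<Sum>e\<in>E. \<Sum>v\<in>{v\<in>V. v \<in> e}. H v e)"
    using 1 by (intro sum.cong) auto
  also have "\<dots> = (\<Sum>v\<in>V. \<Sum>e\<in>{e\<in>E. v \<in> e}. H v e)"
    using sum.swap_restrict[OF fE fV] by simp
  also have "\<dots> = (\<Sum>v\<in>V. \<Sum>u\<in>nbr V E v. H v {v,u})"
  proof (intro sum.cong refl)
    fix v assume "v \<in> V"
    show "(\<Sum>e\<in>{e\<in>E. v \<in> e}. H v e) = (\<Sum>u\<in>nbr V E v. H v {v,u})"
      unfolding edges_at[OF s] by (subst sum.reindex[OF inj_at]) simp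
  qed
  finally show ?thesis .
qed

lemma handshake:
  assumes s: "simple_graph V E"
  shows "(\<Sum>v\<in>V. degree E v) = 2 * card E"
proof -
  have "(\<Sum>e\<in>E. \<Sum>v\<in>e. (1::nat)) = (\<Sum>v\<in>V. \<Sum>u\<in>nbr V E v. 1)"
    by (rule sum_edges_swap[OF s])
  moreover have "\<And>e. e \<in> E \<Longrightarrow> (\<Sum>v\<in>e. (1::nat)) = 2" using sg_edge[OF s] by fastforce
  ultimately show ?thesis using degree_nbr[OF s] by simp
qed

lemma sombor_split:
  assumes s: "simple_graph V E"
    and pr: "\<And>a b. {a,b} \<in> E \<Longrightarrow> S a b + S b a = sqrt ((real (degree E a))\<^sup>2 + (real (degree E b))\<^sup>2)"
  shows "sombor V E = (\<Sum>v\<in>V. \<Sum>u\<in>nbr V E v. S v u)"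
proof -
  define H where "H v e = S v (THE u. e = {v,u})" for v e
  have "\<And>e. e \<in> E \<Longrightarrow> sqrt (\<Sum>v\<in>e. (real (degree E v))\<^sup>2) = (\<Sum>v\<in>e. H v e)"
  proof -
    fix e assume e: "e \<in> E"
    then obtain a b where ab: "a \<noteq> b" "e = {a,b}" using sg_edge[OF s] by blast
    have "(THE u. {a,b} = {a,u}) = b" by (rule the_equality) (auto simp: doubleton_eq_iff)
    moreover have "(THE u. {a,b} = {b,u}) = a" by (rule the_equality) (auto simp: doubleton_eq_iff)
    ultimately show "sqrt (\<Sum>v\<in>e. (real (degree E v))\<^sup>2) = (\<Sum>v\<in>e. H v e)"
      using ab pr[of a b] e by (simp add: H_def)
  qed
  then have "sombor V E = (\<Sum>e\<in>E. \<Sum>v\<in>e. H v e)" unfolding sombor_def by simp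
  also have "\<dots> = (\<Sum>v\<in>V. \<Sum>u\<in>nbr V E v. H v {v,u})" by (rule sum_edges_swap[OF s])
  also have "\<dots> = (\<Sum>v\<in>V. \<Sum>u\<in>nbr V E v. S v u)"
  proof -
    have th: "\<And>v u. (THE u'. {v,u} = {v,u'}) = u" by (rule the_equality) (auto simp: doubleton_eq_iff)
    show ?thesis unfolding H_def th ..
  qed
  finally show ?thesis .
qed

lemma path_len_le: assumes "is_path V E p" "finite V" shows "length p \<le> card V"
proof -
  have "length p = card (set p)" using assms distinct_card unfolding is_path_def by metis
  also have "\<dots> \<le> card V" using assms unfolding is_path_def by (simp add: card_mono)
  finally show ?thesis .
qed

lemma longest_path:
  assumes fV: "finite V" and p0: "is_path V E p0" and q0: "Q p0"
  shows "\<exists>p. is_path V E p \<and> Q p \<and> (\<forall>q. is_path V E q \<and> Q q \<longrightarrow> length q \<le> length p)"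
proof -
  define P where "P k = (\<exists>p. is_path V E p \<and> Q p \<and> length p = k)" for k
  have 1: "P (length p0)" unfolding P_def using p0 q0 by auto
  have 2: "\<forall>y. P y \<longrightarrow> y \<le> card V"
  proof (intro allI impI)
    fix y assume "P y"
    then obtain p where "is_path V E p" "length p = y" unfolding P_def by auto
    then show "y \<le> card V" using path_len_le[OF _ fV] by auto
  qed
  obtain k where k: "P k" "\<forall>y. P y \<longrightarrow> y \<le> k" using Nat.ex_has_greatest_nat[OF 1 2] by auto
  then obtain p where p: "is_path V E p" "Q p" "length p = k" unfolding P_def by auto
  have "\<forall>q. is_path V E q \<and> Q q \<longrightarrow> length q \<le> length p"
  proof (intro allI impI)
    fix q assume "is_path V E q \<and> Q q"
    then have "P (length q)" unfolding P_def by auto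
    then show "length q \<le> length p" using k(2) p(3) by auto
  qed
  then show ?thesis using p by auto
qed

lemma path_extend:
  assumes p: "is_path V E p" and w: "w \<in> V" "w \<notin> set p" and e: "{last p, w} \<in> E"
  shows "is_path V E (p @ [w])"
  unfolding is_path_def
proof (intro conjI allI impI)
  show "p @ [w] \<noteq> []" by simp
  show "distinct (p @ [w])" using p w unfolding is_path_def by simp
  show "set (p @ [w]) \<subseteq> V" using p w unfolding is_path_def by simp
  fix i assume i: "Suc i < length (p @ [w])"
  show "{(p @ [w]) ! i, (p @ [w]) ! Suc i} \<in> E"
  proof (cases "Suc i < length p")
    case True then show ?thesis using p unfolding is_path_def by (simp add: nth_append)
  next
    case False
    then have "i = length p - 1" "p \<noteq> []" using i p unfolding is_path_def by auto
    then show ?thesis using e False by (simp add: nth_append last_conv_nth)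
  qed
qed

lemma path_drop:
  assumes p: "is_path V E p" and j: "j < length p"
  shows "is_path V E (drop j p)" "hd (drop j p) = p ! j" "last (drop j p) = last p"
    "length (drop j p) = length p - j"
proof -
  show "is_path V E (drop j p)" unfolding is_path_def
  proof (intro conjI allI impI)
    show "drop j p \<noteq> []" using j by simp
    show "distinct (drop j p)" using p unfolding is_path_def by simp
    show "set (drop j p) \<subseteq> V" using p unfolding is_path_def by (meson order_trans set_drop_subset)
    fix i assume "Suc i < length (drop j p)"
    then show "{drop j p ! i, drop j p ! Suc i} \<in> E" using p unfolding is_path_def
      by (simp add: add.commute)
  qed
  show "hd (drop j p) = p ! j" using j by (simp add: hd_drop_conv_nth)
  show "last (drop j p) = last p" using j by simp
  show "length (drop j p) = length p - j" by simp
qed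

lemma path_last_edge:
  assumes p: "is_path V E p" and l: "length p \<ge> 2"
  shows "{p ! (length p - 2), last p} \<in> E"
proof -
  have "Suc (length p - 2) < length p" using l by simp
  then have "{p ! (length p - 2), p ! Suc (length p - 2)} \<in> E" using p unfolding is_path_def by blast
  moreover have "Suc (length p - 2) = length p - 1" using l by simp
  moreover have "last p = p ! (length p - 1)" using p unfolding is_path_def by (simp add: last_conv_nth)
  ultimately show ?thesis by simp
qed

lemma back_nbr:
  assumes s: "simple_graph V E" and nc: "\<not> has_cycle V E" and p: "is_path V E p"
    and l: "length p \<ge> 2" and e: "{last p, w} \<in> E" and w: "w \<in> set p"
  shows "w = p ! (length p - 2)"
proof -
  obtain j where j: "j < length p" "p ! j = w" using w by (meson in_set_conv_nth)
  have lp: "last p = p ! (length p - 1)" using p unfolding is_path_def by (simp add: last_conv_nth)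
  have "w \<noteq> last p" using sg_edge2[OF s e] by auto
  then have "j \<noteq> length p - 1" using j lp by auto
  moreover have "\<not> j < length p - 2"
  proof
    assume jj: "j < length p - 2"
    have "is_path V E (drop j p)" "length (drop j p) \<ge> 3" "{last (drop j p), hd (drop j p)} \<in> E"
      using path_drop[OF p j(1)] jj e j by auto
    then show False using nc unfolding has_cycle_def by blast
  qed
  ultimately have "j = length p - 2" using j by linarith
  then show ?thesis using j by simp
qed

lemma maximal_path_leaf:
  assumes s: "simple_graph V E" and nc: "\<not> has_cycle V E" and p: "is_path V E p"
    and l: "length p \<ge> 2" and mx: "\<And>w. w \<in> V \<Longrightarrow> w \<notin> set p \<Longrightarrow> {last p, w} \<in> E \<Longrightarrow> False"
  shows "nbr V E (last p) = {p ! (length p - 2)}"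
proof
  show "nbr V E (last p) \<subseteq> {p ! (length p - 2)}"
  proof
    fix w assume "w \<in> nbr V E (last p)"
    then have w: "w \<in> V" "{last p, w} \<in> E" unfolding nbr_def by auto
    then have "w \<in> set p" using mx by blast
    then show "w \<in> {p ! (length p - 2)}" using back_nbr[OF s nc p l w(2)] by simp
  qed
  have "{p ! (length p - 2), last p} \<in> E" by (rule path_last_edge[OF p l])
  moreover have "p ! (length p - 2) \<in> V" using p l unfolding is_path_def by auto
  ultimately show "{p ! (length p - 2)} \<subseteq> nbr V E (last p)" unfolding nbr_def
    by (simp add: insert_commute)
qed

lemma two_elems: assumes "finite V" "card V \<ge> 2" shows "\<exists>a b. a \<in> V \<and> b \<in> V \<and> a \<noteq> b"
proof (rule ccontr)
  assume "\<not> ?thesis"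
  then have "card V \<le> Suc 0" using card_le_Suc0_iff_eq[OF assms(1)] by blast
  then show False using assms(2) by simp
qed

lemma tree_simple: "is_tree V E \<Longrightarrow> simple_graph V E" unfolding is_tree_def by simp
lemma tree_nc: "is_tree V E \<Longrightarrow> \<not> has_cycle V E" unfolding is_tree_def by simp
lemma tree_conn: "is_tree V E \<Longrightarrow> u \<in> V \<Longrightarrow> v \<in> V \<Longrightarrow> \<exists>p. is_path V E p \<and> hd p = u \<and> last p = v"
  unfolding is_tree_def connected_graph_def by blast

lemma path_len2: assumes "is_path V E p" "hd p \<noteq> last p" shows "length p \<ge> 2"
proof (rule ccontr)
  assume "\<not> length p \<ge> 2"
  moreover have "p \<noteq> []" using assms unfolding is_path_def by simp
  ultimately have "length p = Suc 0" by (cases p) (auto simp: not_le)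
  then obtain x where "p = [x]" using length_Suc_conv[of p 0] by auto
  then show False using assms by simp
qed

lemma path_second: assumes "is_path V E p" "length p \<ge> 2" shows "p ! 1 \<in> nbr V E (hd p)"
proof -
  have "{p ! 0, p ! Suc 0} \<in> E" using assms unfolding is_path_def by auto
  moreover have "hd p = p ! 0" using assms(2) by (cases p) auto
  moreover have "p ! 1 \<in> V" using assms unfolding is_path_def by auto
  ultimately show ?thesis unfolding nbr_def by simp
qed

lemma tree_leaf_exists:
  assumes t: "is_tree V E" and c: "card V \<ge> 2"
  shows "\<exists>v\<in>V. \<exists>u. nbr V E v = {u}"
proof -
  have s: "simple_graph V E" and nc: "\<not> has_cycle V E" using t tree_simple tree_nc by auto
  have fV: "finite V" using sg_finV[OF s] .
  obtain a b where ab: "a \<in> V" "b \<in> V" "a \<noteq> b" using two_elems[OF fV c] by blast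
  obtain p0 where p0: "is_path V E p0" "hd p0 = a" "last p0 = b" using tree_conn[OF t ab(1,2)] by blast
  have "length p0 \<ge> 2" using path_len2[OF p0(1)] p0 ab by simp
  then have "\<exists>p. is_path V E p \<and> length p \<ge> 2 \<and> (\<forall>q. is_path V E q \<and> length q \<ge> 2 \<longrightarrow> length q \<le> length p)"
    using longest_path[OF fV p0(1), of "\<lambda>q. length q \<ge> 2"] by simp
  then obtain p where p: "is_path V E p" "length p \<ge> 2"
    and mx: "\<forall>q. is_path V E q \<and> length q \<ge> 2 \<longrightarrow> length q \<le> length p"
    by blast
  have "nbr V E (last p) = {p ! (length p - 2)}"
  proof (rule maximal_path_leaf[OF s nc p(1) p(2)])
    fix w assume w: "w \<in> V" "w \<notin> set p" "{last p, w} \<in> E"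
    have "is_path V E (p @ [w])" by (rule path_extend[OF p(1) w])
    then have "length (p @ [w]) \<le> length p" using mx[rule_format, of "p @ [w]"] p(2) by simp
    then show False by simp
  qed
  moreover have "last p \<in> V" using p unfolding is_path_def by auto
  ultimately show ?thesis by (intro bexI[of _ "last p"]) auto
qed

lemma tree_remove_leaf:
  assumes t: "is_tree V E" and v: "v \<in> V" and nv: "nbr V E v = {u}"
  shows "is_tree (V - {v}) (E - {{v,u}})" "{v,u} \<in> E" "u \<noteq> v"
proof -
  have s: "simple_graph V E" and nc: "\<not> has_cycle V E" using t tree_simple tree_nc by auto
  show e: "{v,u} \<in> E" using nv unfolding nbr_def by auto
  show uv: "u \<noteq> v" using sg_edge2[OF s e] by auto
  have uV: "u \<in> V" using nv unfolding nbr_def by auto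
  have edge_v: "\<And>x. {v,x} \<in> E \<Longrightarrow> x = u" using nv sg_edge2[OF s] unfolding nbr_def by blast
  let ?V = "V - {v}" and ?E = "E - {{v,u}}"
  have s': "simple_graph ?V ?E" unfolding simple_graph_def
  proof (intro conjI ballI)
    show "finite ?V" using sg_finV[OF s] by simp
    fix e assume e: "e \<in> ?E"
    then obtain a b where ab: "a \<in> V" "b \<in> V" "a \<noteq> b" "e = {a,b}" using sg_edge[OF s] by blast
    have "a \<noteq> v"
    proof
      assume "a = v" then have "b = u" using edge_v e ab by auto
      then show False using e ab \<open>a = v\<close> by auto
    qed
    moreover have "b \<noteq> v"
    proof
      assume "b = v" then have "a = u" using edge_v e ab by (metis DiffD1 insert_commute)
      then show False using e ab \<open>b = v\<close> by (auto simp: insert_commute)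
    qed
    ultimately show "\<exists>a b. a \<in> ?V \<and> b \<in> ?V \<and> a \<noteq> b \<and> e = {a, b}" using ab by blast
  qed
  have ne: "?V \<noteq> {}" using uV uv by auto
  have nc': "\<not> has_cycle ?V ?E"
  proof
    assume "has_cycle ?V ?E"
    then obtain p where "is_path ?V ?E p" "length p \<ge> 3" "{last p, hd p} \<in> ?E" unfolding has_cycle_def by blast
    then have "is_path V E p" "length p \<ge> 3" "{last p, hd p} \<in> E" unfolding is_path_def by auto
    then show False using nc unfolding has_cycle_def by blast
  qed
  have conn: "connected_graph ?V ?E" unfolding connected_graph_def
  proof (intro ballI)
    fix a b assume a: "a \<in> ?V" and b: "b \<in> ?V"
    obtain p where p: "is_path V E p" "hd p = a" "last p = b" using tree_conn[OF t] a b by blast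
    have vp: "v \<notin> set p"
    proof
      assume "v \<in> set p"
      then obtain i where i: "i < length p" "p ! i = v" by (meson in_set_conv_nth)
      have pne: "p \<noteq> []" using p unfolding is_path_def by simp
      have "i \<noteq> 0"
      proof
        assume "i = 0" then have "hd p = v" using i pne by (simp add: hd_conv_nth)
        then show False using p(2) a by simp
      qed
      moreover have "i \<noteq> length p - 1"
      proof
        assume "i = length p - 1" then have "last p = v" using i pne by (simp add: last_conv_nth)
        then show False using p(3) b by simp
      qed
      ultimately have i1: "Suc i < length p" "0 < i" using i by auto
      have "Suc (i - 1) < length p" using i1 by simp
      then have "{p ! (i - 1), p ! Suc (i - 1)} \<in> E" using p(1) unfolding is_path_def by blast
      then have "{v, p ! (i - 1)} \<in> E" using i i1 by (simp add: insert_commute)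
      then have x1: "p ! (i - 1) = u" using edge_v by blast
      have "{p ! i, p ! Suc i} \<in> E" using p(1) i1 unfolding is_path_def by auto
      then have x2: "p ! Suc i = u" using edge_v i by simp
      have "distinct p" using p unfolding is_path_def by simp
      then have "p ! (i - 1) \<noteq> p ! Suc i" using i1 by (simp add: nth_eq_iff_index_eq)
      then show False using x1 x2 by simp
    qed
    have "is_path ?V ?E p" unfolding is_path_def
    proof (intro conjI allI impI)
      show "p \<noteq> []" "distinct p" using p unfolding is_path_def by auto
      show "set p \<subseteq> ?V" using p vp unfolding is_path_def by auto
      fix i assume i: "Suc i < length p"
      then have "{p ! i, p ! Suc i} \<in> E" using p unfolding is_path_def by auto
      moreover have "p ! i \<noteq> v" "p ! Suc i \<noteq> v" using vp i by (auto simp: in_set_conv_nth)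
      ultimately show "{p ! i, p ! Suc i} \<in> ?E" by (auto simp: doubleton_eq_iff)
    qed
    then show "\<exists>p. is_path ?V ?E p \<and> hd p = a \<and> last p = b" using p by blast
  qed
  show "is_tree ?V ?E" unfolding is_tree_def using s' ne nc' conn by blast
qed

lemma tree_edges: "is_tree V E \<Longrightarrow> card E = card V - 1"
proof (induction "card V" arbitrary: V E)
  case 0
  then have "finite V" "V \<noteq> {}" using sg_finV tree_simple unfolding is_tree_def by auto
  then show ?case using 0 by simp
next
  case (Suc k)
  have s: "simple_graph V E" using Suc tree_simple by blast
  show ?case
  proof (cases "k = 0")
    case True
    have "E = {}"
    proof (rule ccontr)
      assume "E \<noteq> {}"
      then obtain a b where "a \<in> V" "b \<in> V" "a \<noteq> b" using sg_edge[OF s] by blast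
      then have "\<not> card V \<le> Suc 0" using card_le_Suc0_iff_eq[OF sg_finV[OF s]] by blast
      then show False using True Suc by simp
    qed
    then show ?thesis using True Suc by simp
  next
    case False
    then have "card V \<ge> 2" using Suc by simp
    then obtain v u where v: "v \<in> V" "nbr V E v = {u}" using tree_leaf_exists Suc by blast
    note r = tree_remove_leaf[OF Suc(3) v]
    have "card (V - {v}) = k" using Suc v by simp
    then have "card (E - {{v,u}}) = k - 1" using Suc(1) r by blast
    moreover have "finite E" using sg_finE[OF s] .
    moreover have "card E > 0" using r(2) \<open>finite E\<close> card_gt_0_iff by blast
    ultimately have "card E = k" using r(2) False by (simp add: card_Diff_singleton_if)
    then show ?thesis using Suc by simp
  qed
qed

lemma path_nbr: assumes "is_path V E p" "Suc i < length p" shows "p ! Suc i \<in> nbr V E (p ! i)"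
proof -
  have "{p ! i, p ! Suc i} \<in> E" using assms unfolding is_path_def by blast
  moreover have "p ! Suc i \<in> V" using assms unfolding is_path_def by (meson nth_mem subsetD)
  ultimately show ?thesis unfolding nbr_def by simp
qed

lemma path_hd_last_nth: assumes "is_path V E p"
  shows "hd p = p ! 0" "last p = p ! (length p - 1)" "length p > 0"
  using assms unfolding is_path_def by (auto simp: hd_conv_nth last_conv_nth)

lemma deg1_nbr: assumes s: "simple_graph V E" and d: "degree E v = 1" and u: "u \<in> nbr V E v"
  shows "nbr V E v = {u}"
proof -
  have "card (nbr V E v) = 1" using d degree_nbr[OF s] by simp
  then obtain x where "nbr V E v = {x}" using card_1_singletonE by blast
  then show ?thesis using u by simp
qed

lemma edge_nbr: assumes "{a,b} \<in> E" "simple_graph V E" shows "b \<in> nbr V E a"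
  unfolding nbr_def using sg_edge2[OF assms(2,1)] assms(1) by simp

lemma edge_nbr': assumes "{a,b} \<in> E" "simple_graph V E" shows "a \<in> nbr V E b"
  unfolding nbr_def using sg_edge2[OF assms(2,1)] assms(1) by (simp add: insert_commute)

lemma deg_pos: assumes t: "is_tree V E" and c: "card V \<ge> 2" and v: "v \<in> V"
  shows "degree E v \<ge> 1"
proof -
  have s: "simple_graph V E" using t tree_simple by blast
  have fV: "finite V" using sg_finV[OF s] .
  obtain a b where ab: "a \<in> V" "b \<in> V" "a \<noteq> b" using two_elems[OF fV c] by blast
  obtain w where w: "w \<in> V" "w \<noteq> v" using ab by blast
  obtain p where p: "is_path V E p" "hd p = v" "last p = w" using tree_conn[OF t v w(1)] by blast
  have "length p \<ge> 2" using path_len2[OF p(1)] p w by simp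
  then have "p ! 1 \<in> nbr V E v" using path_second[OF p(1)] p(2) by simp
  then have "nbr V E v \<noteq> {}" by blast
  then have "card (nbr V E v) \<noteq> 0" using fin_nbr[OF s] by simp
  then show ?thesis using degree_nbr[OF s] by simp
qed

lemma no_leaf_leaf:
  assumes t: "is_tree V E" and c: "card V \<ge> 3" and e: "{a,b} \<in> E"
    and da: "degree E a = 1" and db: "degree E b = 1"
  shows False
proof -
  have s: "simple_graph V E" using t tree_simple by blast
  have fV: "finite V" using sg_finV[OF s] .
  have na: "nbr V E a = {b}" using deg1_nbr[OF s da edge_nbr[OF e s]] .
  have nb: "nbr V E b = {a}" using deg1_nbr[OF s db edge_nbr'[OF e s]] .
  have abV: "a \<in> V" "b \<in> V" using sg_edge2[OF s e] by auto
  have "card (V - {a,b}) > 0"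
  proof -
    have "card (V - {a,b}) \<ge> card V - card {a,b}" by (rule diff_card_le_card_Diff) simp
    moreover have "card {a,b} \<le> 2" by (simp add: card_insert_le_m1)
    ultimately show ?thesis using c by linarith
  qed
  then obtain w where w: "w \<in> V" "w \<noteq> a" "w \<noteq> b" by (metis Diff_iff card_gt_0_iff ex_in_conv insertCI)
  obtain p where p: "is_path V E p" "hd p = a" "last p = w" using tree_conn[OF t abV(1) w(1)] by blast
  note hl = path_hd_last_nth[OF p(1)]
  have l2: "length p \<ge> 2" using path_len2[OF p(1)] p w by simp
  have p1: "p ! 1 = b" using path_second[OF p(1) l2] p(2) na by simp
  have l3: "length p \<ge> 3"
  proof (rule ccontr)
    assume "\<not> length p \<ge> 3"
    then have "length p = 2" using l2 by simp
    then have "last p = b" using hl p1 by simp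
    then show False using p w by simp
  qed
  have "p ! Suc 1 \<in> nbr V E (p ! 1)" using path_nbr[OF p(1)] l3 by simp
  then have "p ! 2 = a" using p1 nb by (simp add: numeral_2_eq_2)
  moreover have "p ! 0 = a" using hl p by simp
  moreover have "distinct p" using p unfolding is_path_def by simp
  ultimately have "p ! 2 = p ! 0" "distinct p" by auto
  moreover have "2 < length p" "0 < length p" using l3 by auto
  ultimately have "(2::nat) = 0" using nth_eq_iff_index_eq by metis
  then show False by simp
qed

lemma sqrt8: "sqrt 8 = 2 * sqrt 2"
proof -
  have "sqrt 8 = sqrt (4 * 2)" by simp
  also have "\<dots> = sqrt 4 * sqrt 2" by (rule real_sqrt_mult)
  finally show ?thesis by simp
qed

lemma nums: "1.414 < sqrt 2" "sqrt 2 < 1.4143" "2.236 < sqrt 5" "sqrt 5 < 2.2361"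
proof -
  show "1.414 < sqrt 2" by (rule real_less_rsqrt) (simp add: power2_eq_square)
  show "2.236 < sqrt 5" by (rule real_less_rsqrt) (simp add: power2_eq_square)
  show "sqrt 2 < 1.4143" by (rule real_less_lsqrt) (simp_all add: power2_eq_square)
  show "sqrt 5 < 2.2361" by (rule real_less_lsqrt) (simp_all add: power2_eq_square)
qed

lemma sqrt_ge_of_sq: assumes "(c::real) \<ge> 0" "c^2 \<le> x" shows "c \<le> sqrt x"
  using real_le_rsqrt assms(2) by blast

lemma sq_ge: assumes "(a::nat) \<ge> k" shows "real a ^ 2 \<ge> real k ^ 2"
  using assms by (simp add: power_mono)

definition cf :: "nat \<Rightarrow> nat \<Rightarrow> real" where
  "cf a b = (if a = 1 then sqrt 5 - sqrt 2 else if b = 1 then sqrt (real a ^ 2 + 1) - sqrt 5 + sqrt 2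
     else if a = 2 then sqrt 2 else if b = 2 then sqrt (real a ^ 2 + 4) - sqrt 2
     else sqrt (real a ^ 2 + real b ^ 2) / 2)"

lemma cf_pair: assumes "a \<ge> 1" "b \<ge> 1" "\<not> (a = 1 \<and> b = 1)"
  shows "cf a b + cf b a = sqrt (real a ^ 2 + real b ^ 2)"
proof -
  consider "a = 1" | "a \<noteq> 1" "b = 1" | "a = 2" "b \<noteq> 1" | "b = 2" "a \<noteq> 1" "a \<noteq> 2" | "a \<ge> 3" "b \<ge> 3"
    using assms by linarith
  then show ?thesis
  proof cases
    case 1 then have "b \<noteq> 1" using assms by simp
    then show ?thesis using 1 by (simp add: cf_def add.commute)
  next
    case 2 then show ?thesis by (simp add: cf_def)
  next
    case 3 then show ?thesis
    proof (cases "b = 2")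
      case True then show ?thesis using 3 by (simp add: cf_def sqrt8)
    next
      case False then show ?thesis using 3 by (simp add: cf_def add.commute)
    qed
  next
    case 4 then show ?thesis by (simp add: cf_def)
  next
    case 5 then show ?thesis by (simp add: cf_def add.commute)
  qed
qed

lemma cf_big: assumes a: "a \<ge> 3" and b: "b \<ge> 1" shows "cf a b \<ge> 2.1"
proof -
  have a9: "real a ^ 2 \<ge> 9" using sq_ge[OF a] by simp
  note n = nums
  consider "b = 1" | "b = 2" | "b \<ge> 3" using b by linarith
  then show ?thesis
  proof cases
    case 1
    have "sqrt (real a ^ 2 + 1) \<ge> 3.16" by (rule sqrt_ge_of_sq) (use a9 in \<open>simp_all add: power2_eq_square\<close>)
    then show ?thesis using 1 a n by (simp add: cf_def)
  next
    case 2
    have "sqrt (real a ^ 2 + 4) \<ge> 3.6" by (rule sqrt_ge_of_sq) (use a9 in \<open>simp_all add: power2_eq_square\<close>)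
    then show ?thesis using 2 a n by (simp add: cf_def)
  next
    case 3
    have b9: "real b ^ 2 \<ge> 9" using sq_ge[OF 3] by simp
    have "sqrt (real a ^ 2 + real b ^ 2) \<ge> 4.2" by (rule sqrt_ge_of_sq) (use a9 b9 in \<open>simp_all add: power2_eq_square\<close>)
    then show ?thesis using 3 a by (simp add: cf_def)
  qed
qed

lemma eps_pos: assumes "(D::real) \<ge> 3"
  shows "sqrt (D^2 + 4) - sqrt (D^2 + 1) < 2 * sqrt 2 - sqrt 5"
proof -
  define P where "P = sqrt (D^2 + 1)"
  have D9: "D^2 \<ge> 9" using power_mono[of 3 D 2] assms by simp
  have P0: "P \<ge> 3" unfolding P_def
    by (rule sqrt_ge_of_sq) (use D9 in \<open>simp_all add: power2_eq_square\<close>)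
  have P2: "P^2 = D^2 + 1" unfolding P_def by simp
  have "sqrt (D^2 + 4) < P + 0.59"
  proof (rule real_less_lsqrt)
    show "0 \<le> P + 0.59" using P0 by simp
    have "(P + 0.59)^2 = P^2 + 1.18 * P + 0.3481" by (simp add: power2_eq_square algebra_simps)
    then show "D^2 + 4 < (P + 0.59)^2" using P2 P0 by simp
  qed
  then show ?thesis using nums unfolding P_def by simp
qed

definition Sw :: "'a set set \<Rightarrow> 'a \<Rightarrow> 'a \<Rightarrow> 'a \<Rightarrow> real" where
  "Sw E h v u = (if v = h then (if degree E u = 1 then sqrt (real (degree E h) ^ 2 + 1) - sqrt 5 + sqrt 2
                                else sqrt (real (degree E h) ^ 2 + 4) - sqrt 2)
     else if u = h then (if degree E v = 1 then sqrt 5 - sqrt 2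
            else sqrt (real (degree E h) ^ 2 + real (degree E v) ^ 2) - sqrt (real (degree E h) ^ 2 + 4) + sqrt 2)
     else cf (degree E v) (degree E u))"

lemma Sw_pair:
  assumes t: "is_tree V E" and c: "card V \<ge> 3" and e: "{a,b} \<in> E"
  shows "Sw E h a b + Sw E h b a = sqrt ((real (degree E a))\<^sup>2 + (real (degree E b))\<^sup>2)"
proof -
  have s: "simple_graph V E" using t tree_simple by blast
  have ab: "a \<in> V" "b \<in> V" "a \<noteq> b" using sg_edge2[OF s e] by auto
  have da: "degree E a \<ge> 1" using deg_pos[OF t _ ab(1)] c by simp
  have db: "degree E b \<ge> 1" using deg_pos[OF t _ ab(2)] c by simp
  have nb: "\<not> (degree E a = 1 \<and> degree E b = 1)" using no_leaf_leaf[OF t c e] by blast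
  show ?thesis
  proof (cases "a = h")
    case True
    then show ?thesis using ab by (cases "degree E b = 1") (simp_all add: Sw_def)
  next
    case False
    show ?thesis
    proof (cases "b = h")
      case True
      then show ?thesis using ab False by (cases "degree E a = 1") (simp_all add: Sw_def add.commute)
    next
      case False2: False
      then show ?thesis using False cf_pair[OF da db nb] by (simp add: Sw_def)
    qed
  qed
qed

lemma sombor_Sw:
  assumes t: "is_tree V E" and c: "card V \<ge> 3"
  shows "sombor V E = (\<Sum>v\<in>V. \<Sum>u\<in>nbr V E v. Sw E h v u)"
  by (rule sombor_split[OF tree_simple[OF t]]) (rule Sw_pair[OF t c])

definition leafnb :: "'a set \<Rightarrow> 'a set set \<Rightarrow> 'a \<Rightarrow> nat" where
  "leafnb V E h = card {u\<in>nbr V E h. degree E u = 1}"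

lemma sum_if_const:
  assumes "finite A"
  shows "(\<Sum>x\<in>A. if P x then (a::real) else b) = real (card {x\<in>A. P x}) * a + real (card {x\<in>A. \<not> P x}) * b"
proof -
  have "(\<Sum>x\<in>A. if P x then (a::real) else b) = (\<Sum>x\<in>{x\<in>A. P x}. a) + (\<Sum>x\<in>{x\<in>A. \<not> P x}. b)"
    using assms by (simp add: sum.If_cases Int_def)
  then show ?thesis by simp
qed

lemma T_hub:
  fixes h :: 'a
  assumes s: "simple_graph V E"
  defines "L \<equiv> leafnb V E h"
  shows "(\<Sum>u\<in>nbr V E h. Sw E h h u) = real L * (sqrt (real (degree E h) ^ 2 + 1) - sqrt 5 + sqrt 2)
     + (real (degree E h) - real L) * (sqrt (real (degree E h) ^ 2 + 4) - sqrt 2)"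
proof -
  let ?N = "nbr V E h"
  have fN: "finite ?N" using fin_nbr[OF s] .
  have "(\<Sum>u\<in>?N. Sw E h h u) = (\<Sum>u\<in>?N. if degree E u = 1 then sqrt (real (degree E h) ^ 2 + 1) - sqrt 5 + sqrt 2
                                else sqrt (real (degree E h) ^ 2 + 4) - sqrt 2)"
    by (simp add: Sw_def)
  also have "\<dots> = real (card {u\<in>?N. degree E u = 1}) * (sqrt (real (degree E h) ^ 2 + 1) - sqrt 5 + sqrt 2)
     + real (card {u\<in>?N. degree E u \<noteq> 1}) * (sqrt (real (degree E h) ^ 2 + 4) - sqrt 2)"
    by (rule sum_if_const[OF fN])
  also have "card {u\<in>?N. degree E u = 1} = L" unfolding L_def leafnb_def ..
  also have "card {u\<in>?N. degree E u \<noteq> 1} = card ?N - L"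
  proof -
    have "{u\<in>?N. degree E u \<noteq> 1} = ?N - {u\<in>?N. degree E u = 1}" by auto
    then show ?thesis unfolding L_def leafnb_def using fN by (simp add: card_Diff_subset)
  qed
  finally have eq: "(\<Sum>u\<in>?N. Sw E h h u) = real L * (sqrt (real (degree E h) ^ 2 + 1) - sqrt 5 + sqrt 2)
     + real (card ?N - L) * (sqrt (real (degree E h) ^ 2 + 4) - sqrt 2)" .
  have "L \<le> card ?N" unfolding L_def leafnb_def using fN by (simp add: card_mono)
  then have "real (card ?N - L) = real (degree E h) - real L" using degree_nbr[OF s] by simp
  then show ?thesis using eq by simp
qed

lemma T_leaf:
  assumes s: "simple_graph V E" and vh: "v \<noteq> h" and d: "degree E v = 1"
  shows "(\<Sum>u\<in>nbr V E v. Sw E h v u) = sqrt 5 - sqrt 2"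
proof -
  have "card (nbr V E v) = 1" using d degree_nbr[OF s] by simp
  then obtain x where x: "nbr V E v = {x}" using card_1_singletonE by blast
  show ?thesis unfolding x using vh d by (simp add: Sw_def cf_def)
qed

lemma T_two:
  assumes s: "simple_graph V E" and vh: "v \<noteq> h" and d: "degree E v = 2"
  shows "(\<Sum>u\<in>nbr V E v. Sw E h v u) = 2 * sqrt 2"
proof -
  have "\<And>u. Sw E h v u = sqrt 2" using vh d by (simp add: Sw_def cf_def)
  moreover have "card (nbr V E v) = 2" using d degree_nbr[OF s] by simp
  ultimately show ?thesis by simp
qed

lemma T_big:
  assumes t: "is_tree V E" and c: "card V \<ge> 3" and v: "v \<in> V" and vh: "v \<noteq> h" and d: "degree E v \<ge> 3"
  shows "(\<Sum>u\<in>nbr V E v. Sw E h v u) \<ge> 2.1 * real (degree E v) - 0.7"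
proof -
  have s: "simple_graph V E" using t tree_simple by blast
  let ?N = "nbr V E v"
  have fN: "finite ?N" using fin_nbr[OF s] .
  have "\<And>u. u \<in> ?N \<Longrightarrow> Sw E h v u \<ge> 2.1 - (if u = h then 0.7 else 0)"
  proof -
    fix u assume u: "u \<in> ?N"
    have uV: "u \<in> V" using u unfolding nbr_def by simp
    have du: "degree E u \<ge> 1" using deg_pos[OF t _ uV] c by simp
    show "Sw E h v u \<ge> 2.1 - (if u = h then 0.7 else 0)"
    proof (cases "u = h")
      case True
      have "real (degree E v) ^ 2 \<ge> 4" using sq_ge[of 2 "degree E v"] d by simp
      then have q: "sqrt (real (degree E h) ^ 2 + real (degree E v) ^ 2) \<ge> sqrt (real (degree E h) ^ 2 + 4)"
        by simp
      have "Sw E h v u = sqrt (real (degree E h) ^ 2 + real (degree E v) ^ 2) - sqrt (real (degree E h) ^ 2 + 4) + sqrt 2"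
        using True vh d by (simp add: Sw_def)
      then have "Sw E h v u \<ge> sqrt 2" using q by linarith
      then show ?thesis using nums True by simp
    next
      case False
      then show ?thesis using vh cf_big[OF d du] by (simp add: Sw_def)
    qed
  qed
  then have "(\<Sum>u\<in>?N. Sw E h v u) \<ge> (\<Sum>u\<in>?N. 2.1 - (if u = h then 0.7 else 0))"
    by (rule sum_mono)
  moreover have "(\<Sum>u\<in>?N. (2.1::real) - (if u = h then 0.7 else 0)) = 2.1 * real (card ?N) - (if h \<in> ?N then 0.7 else 0)"
    using fN by (simp add: sum_subtractf)
  moreover have "card ?N = degree E v" using degree_nbr[OF s] by simp
  ultimately show ?thesis by (auto split: if_splits)
qed

definition gp :: "'a set \<Rightarrow> 'a set set \<Rightarrow> 'a \<Rightarrow> 'a \<Rightarrow> real" where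
  "gp V E h v = (\<Sum>u\<in>nbr V E v. Sw E h v u) - ((2 * sqrt 5 - 4 * sqrt 2) + (3 * sqrt 2 - sqrt 5) * real (degree E v))"

lemma gp_props:
  assumes t: "is_tree V E" and c: "card V \<ge> 3" and v: "v \<in> V" and vh: "v \<noteq> h"
  shows "gp V E h v \<ge> 0" "gp V E h v = 0 \<longleftrightarrow> degree E v \<le> 2"
proof -
  have s: "simple_graph V E" using t tree_simple by blast
  have d1: "degree E v \<ge> 1" using deg_pos[OF t _ v] c by simp
  consider "degree E v = 1" | "degree E v = 2" | "degree E v \<ge> 3" using d1 by linarith
  then have "(degree E v \<le> 2 \<longrightarrow> gp V E h v = 0) \<and> (degree E v \<ge> 3 \<longrightarrow> gp V E h v > 0)"
  proof cases
    case 1 then show ?thesis using T_leaf[OF s vh] by (simp add: gp_def)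
  next
    case 2 then show ?thesis using T_two[OF s vh] by (simp add: gp_def)
  next
    case 3
    define k where "k = real (degree E v)"
    have k3: "k \<ge> 3" using 3 unfolding k_def by simp
    have T: "(\<Sum>u\<in>nbr V E v. Sw E h v u) \<ge> 21/10 * k - 7/10" using T_big[OF t c v vh 3] unfolding k_def by simp
    have b: "3 * sqrt 2 - sqrt 5 \<le> 2007/1000" using nums by simp
    have "(3 * sqrt 2 - sqrt 5) * k \<le> (2007/1000) * k" using mult_right_mono[OF b] k3 by simp
    moreover have "2 * sqrt 5 - 4 * sqrt 2 < -118/100" using nums by simp
    ultimately have "(2 * sqrt 5 - 4 * sqrt 2) + (3 * sqrt 2 - sqrt 5) * k < 21/10 * k - 7/10" using k3 by linarith
    then have "gp V E h v > 0" using T unfolding gp_def k_def by linarith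
    then show ?thesis using 3 by simp
  qed
  then show "gp V E h v \<ge> 0" "gp V E h v = 0 \<longleftrightarrow> degree E v \<le> 2" using d1 by force+
qed

lemma charging:
  assumes t: "is_tree V E" and c: "card V = n" and n3: "n \<ge> 3" and h: "h \<in> V"
    and dh: "degree E h = D"
  shows "sombor V E = real D * sqrt ((real D)\<^sup>2 + 4) + sqrt 8 * (real n - 2 * real D - 1) + sqrt 5 * real D
           + real (leafnb V E h) * (sqrt ((real D)\<^sup>2 + 1) - sqrt ((real D)\<^sup>2 + 4) + 2 * sqrt 2 - sqrt 5)
           + (\<Sum>v\<in>V - {h}. gp V E h v)"
proof -
  have s: "simple_graph V E" using t tree_simple by blast
  have fV: "finite V" using sg_finV[OF s] .
  define al where "al = 2 * sqrt 5 - 4 * sqrt 2"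
  define be where "be = 3 * sqrt 2 - sqrt 5"
  define T where "T v = (\<Sum>u\<in>nbr V E v. Sw E h v u)" for v
  define L where "L = real (leafnb V E h)"
  have "sombor V E = (\<Sum>v\<in>V. T v)" unfolding T_def using sombor_Sw[OF t] c n3 by simp
  also have "\<dots> = T h + (\<Sum>v\<in>V - {h}. T v)" using sum.remove[OF fV h] by simp
  also have "(\<Sum>v\<in>V - {h}. T v) = (\<Sum>v\<in>V - {h}. al + be * real (degree E v)) + (\<Sum>v\<in>V - {h}. gp V E h v)"
    unfolding gp_def T_def al_def be_def by (simp add: sum.distrib[symmetric])
  also have "(\<Sum>v\<in>V - {h}. al + be * real (degree E v)) = al * real (n - 1) + be * (\<Sum>v\<in>V - {h}. real (degree E v))"
    using fV c h by (simp add: sum.distrib sum_distrib_left)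
  also have "(\<Sum>v\<in>V - {h}. real (degree E v)) = 2 * real n - 2 - real D"
  proof -
    have "(\<Sum>v\<in>V. degree E v) = 2 * card E" by (rule handshake[OF s])
    also have "card E = n - 1" using tree_edges[OF t] c by simp
    finally have hs: "(\<Sum>v\<in>V. real (degree E v)) = 2 * (real n - 1)" using n3
      by (metis of_nat_sum of_nat_mult of_nat_numeral of_nat_diff of_nat_1 le_trans one_le_numeral)
    have "(\<Sum>v\<in>V. real (degree E v)) = real (degree E h) + (\<Sum>v\<in>V - {h}. real (degree E v))"
      using sum.remove[OF fV h] by simp
    then show ?thesis using hs dh by simp
  qed
  also have "T h = L * (sqrt (real D ^ 2 + 1) - sqrt 5 + sqrt 2) + (real D - L) * (sqrt (real D ^ 2 + 4) - sqrt 2)"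
    unfolding T_def L_def using T_hub[OF s, of h] dh by simp
  finally have eq: "sombor V E = L * (sqrt (real D ^ 2 + 1) - sqrt 5 + sqrt 2) + (real D - L) * (sqrt (real D ^ 2 + 4) - sqrt 2)
     + (al * real (n - 1) + be * (2 * real n - 2 - real D) + (\<Sum>v\<in>V - {h}. gp V E h v))" .
  have n1: "real (n - 1) = real n - 1" using n3 by simp
  show ?thesis unfolding eq n1 al_def be_def L_def sqrt8 by (simp add: algebra_simps)
qed

lemma path2: assumes "{a,b} \<in> E" "a \<in> V" "b \<in> V" "a \<noteq> b" shows "is_path V E [a,b]"
  unfolding is_path_def
proof (intro conjI allI impI)
  fix i assume "Suc i < length [a,b]"
  then have "i = 0" by simp
  then show "{[a,b] ! i, [a,b] ! Suc i} \<in> E" using assms by simp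
qed (use assms in auto)

lemma path3: assumes "{a,b} \<in> E" "{b,c} \<in> E" "a \<in> V" "b \<in> V" "c \<in> V" "distinct [a,b,c]"
  shows "is_path V E [a,b,c]"
  unfolding is_path_def
proof (intro conjI allI impI)
  fix i assume "Suc i < length [a,b,c]"
  then have "i = 0 \<or> i = 1" by auto
  then show "{[a,b,c] ! i, [a,b,c] ! Suc i} \<in> E" using assms by auto
qed (use assms in auto)

lemma path4: assumes "{a,b} \<in> E" "{b,c} \<in> E" "{c,d} \<in> E" "a \<in> V" "b \<in> V" "c \<in> V" "d \<in> V"
  "distinct [a,b,c,d]"
  shows "is_path V E [a,b,c,d]"
  unfolding is_path_def
proof (intro conjI allI impI)
  fix i assume "Suc i < length [a,b,c,d]"
  then have "i = 0 \<or> i = 1 \<or> i = 2" by auto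
  then show "{[a,b,c,d] ! i, [a,b,c,d] ! Suc i} \<in> E" using assms by auto
qed (use assms in auto)

lemma no_tri: assumes s: "simple_graph V E" and nc: "\<not> has_cycle V E"
  and e: "{a,b} \<in> E" "{b,c} \<in> E" "{c,a} \<in> E" shows False
proof -
  have ab: "a \<in> V" "b \<in> V" "a \<noteq> b" using sg_edge2[OF s e(1)] by auto
  have bc: "c \<in> V" "b \<noteq> c" using sg_edge2[OF s e(2)] by auto
  have ca: "c \<noteq> a" using sg_edge2[OF s e(3)] by auto
  have "is_path V E [a,b,c]" by (rule path3) (use e ab bc ca in auto)
  then show False using nc e(3) unfolding has_cycle_def by force
qed

lemma no_sq: assumes s: "simple_graph V E" and nc: "\<not> has_cycle V E"
  and e: "{a,b} \<in> E" "{b,c} \<in> E" "{c,d} \<in> E" "{d,a} \<in> E" and ac: "a \<noteq> c" and bd: "b \<noteq> d" shows False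
proof -
  have ab: "a \<in> V" "b \<in> V" "a \<noteq> b" using sg_edge2[OF s e(1)] by auto
  have bc: "c \<in> V" "b \<noteq> c" using sg_edge2[OF s e(2)] by auto
  have cd: "d \<in> V" "c \<noteq> d" using sg_edge2[OF s e(3)] by auto
  have da: "d \<noteq> a" using sg_edge2[OF s e(4)] by auto
  have "is_path V E [a,b,c,d]" by (rule path4) (use e ab bc cd da ac bd in auto)
  then show False using nc e(4) unfolding has_cycle_def by force
qed

definition xf :: "'a set \<Rightarrow> 'a set set \<Rightarrow> 'a \<Rightarrow> 'a \<Rightarrow> 'a" where
  "xf V E h c = (SOME w. w \<in> nbr V E c \<and> w \<noteq> h)"

lemma card_ge2_other: assumes "finite A" "card A \<ge> 2" shows "\<exists>w\<in>A. w \<noteq> h"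
proof (rule ccontr)
  assume "\<not> ?thesis" then have "A \<subseteq> {h}" by auto
  then have "card A \<le> 1" using card_mono[of "{h}" A] by simp
  then show False using assms by simp
qed

lemma xf_props:
  assumes t: "is_tree V E" and h: "h \<in> V" and c: "c \<in> nbr V E h" and dc: "degree E c \<ge> 2"
  shows "xf V E h c \<in> nbr V E c" "xf V E h c \<noteq> h" "xf V E h c \<in> V" "xf V E h c \<notin> nbr V E h"
proof -
  have s: "simple_graph V E" using t tree_simple by blast
  have nc: "\<not> has_cycle V E" using t tree_nc by blast
  have "card (nbr V E c) \<ge> 2" using dc degree_nbr[OF s] by simp
  then have "\<exists>w. w \<in> nbr V E c \<and> w \<noteq> h" using card_ge2_other[OF fin_nbr[OF s]] by blast
  then have w: "xf V E h c \<in> nbr V E c \<and> xf V E h c \<noteq> h" unfolding xf_def by (rule someI_ex)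
  then show "xf V E h c \<in> nbr V E c" "xf V E h c \<noteq> h" "xf V E h c \<in> V" unfolding nbr_def by auto
  show "xf V E h c \<notin> nbr V E h"
  proof
    assume "xf V E h c \<in> nbr V E h"
    then have "{h, xf V E h c} \<in> E" unfolding nbr_def by simp
    moreover have "{h, c} \<in> E" "{c, xf V E h c} \<in> E" using c w unfolding nbr_def by auto
    ultimately show False using no_tri[OF s nc, of h c "xf V E h c"] by (simp add: insert_commute)
  qed
qed

lemma xf_inj:
  assumes t: "is_tree V E" and h: "h \<in> V"
  shows "inj_on (xf V E h) {u\<in>nbr V E h. degree E u \<ge> 2}"
proof (rule inj_onI)
  have s: "simple_graph V E" using t tree_simple by blast
  have nc: "\<not> has_cycle V E" using t tree_nc by blast
  fix c c' assume c: "c \<in> {u\<in>nbr V E h. degree E u \<ge> 2}" and c': "c' \<in> {u\<in>nbr V E h. degree E u \<ge> 2}"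
    and eq: "xf V E h c = xf V E h c'"
  show "c = c'"
  proof (rule ccontr)
    assume ne: "c \<noteq> c'"
    note p = xf_props[OF t h] 
    have 1: "{h,c} \<in> E" "{h,c'} \<in> E" using c c' unfolding nbr_def by auto
    have 2: "{c, xf V E h c} \<in> E" "{c', xf V E h c} \<in> E" using p(1)[of c] p(1)[of c'] c c' eq unfolding nbr_def by auto
    have 3: "h \<noteq> xf V E h c" using p(2)[of c] c by auto
    show False using no_sq[OF s nc 1(1) 2(1), of c'] 2(2) 1(2) ne 3 by (simp add: insert_commute)
  qed
qed

lemma leafnb_bound:
  assumes t: "is_tree V E" and c: "card V \<ge> 3" and h: "h \<in> V"
  shows "degree E h \<le> leafnb V E h + (card V - 1 - degree E h)"
    "degree E h + degree E h \<le> card V - 1 + leafnb V E h"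
proof -
  have s: "simple_graph V E" using t tree_simple by blast
  have fV: "finite V" using sg_finV[OF s] .
  let ?N = "nbr V E h"
  let ?C = "{u\<in>?N. degree E u \<ge> 2}"
  let ?X = "V - {h} - ?N"
  have fN: "finite ?N" using fin_nbr[OF s] .
  have "card ?C \<le> card ?X"
  proof (rule card_inj_on_le[OF xf_inj[OF t h]])
    show "xf V E h ` ?C \<subseteq> ?X" using xf_props[OF t h] by auto
    show "finite ?X" using fV by simp
  qed
  moreover have "card ?X = card V - 1 - degree E h"
  proof -
    have "?N \<subseteq> V - {h}" unfolding nbr_def using sg_edge2[OF s] by auto
    then have "card ?X = card (V - {h}) - card ?N" using fV by (simp add: card_Diff_subset fN)
    then show ?thesis using degree_nbr[OF s] fV h by simp
  qed
  moreover have "degree E h \<le> card V - 1"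
  proof -
    have "?N \<subseteq> V - {h}" unfolding nbr_def using sg_edge2[OF s] by auto
    then have "card ?N \<le> card (V - {h})" using fV by (simp add: card_mono)
    then show ?thesis using degree_nbr[OF s] fV h by simp
  qed
  moreover have "card ?C + leafnb V E h = degree E h"
  proof -
    have d1: "\<And>u. u \<in> ?N \<Longrightarrow> degree E u \<ge> 1" using deg_pos[OF t] c unfolding nbr_def by auto
    have "?N = ?C \<union> {u\<in>?N. degree E u = 1}" using d1 by force
    moreover have "?C \<inter> {u\<in>?N. degree E u = 1} = {}" by auto
    ultimately have "card ?N = card ?C + card {u\<in>?N. degree E u = 1}" using fN
      by (metis (no_types, lifting) card_Un_disjoint finite_Un)
    then show ?thesis using degree_nbr[OF s] unfolding leafnb_def by simp
  qed
  ultimately show "degree E h \<le> leafnb V E h + (card V - 1 - degree E h)"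
    "degree E h + degree E h \<le> card V - 1 + leafnb V E h" by linarith+
qed

lemma three_card: assumes "finite A" "x \<in> A" "y \<in> A" "z \<in> A" "x \<noteq> y" "y \<noteq> z" "x \<noteq> z"
  shows "card A \<ge> 3"
proof -
  have "card {x,y,z} = 3" using assms by simp
  moreover have "card {x,y,z} \<le> card A" using assms by (intro card_mono) auto
  ultimately show ?thesis by simp
qed

lemma two_card: assumes "finite A" "x \<in> A" "y \<in> A" "x \<noteq> y"
  shows "card A \<ge> 2"
proof -
  have "card {x,y} = 2" using assms by simp
  moreover have "card {x,y} \<le> card A" using assms by (intro card_mono) auto
  ultimately show ?thesis by simp
qed

lemma legs_basic: assumes "p \<in> legs V E h"
  shows "is_path V E p" "length p \<ge> 2" "p ! 0 = h" "degree E (last p) = 1" "distinct p"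
    "last p = p ! (length p - 1)"
  using assms unfolding legs_def is_path_def by (auto simp: hd_conv_nth last_conv_nth)

lemma legs_agree:
  assumes s: "simple_graph V E" and deg2: "\<forall>v\<in>V-{h}. degree E v \<le> 2"
    and p: "p \<in> legs V E h" and q: "q \<in> legs V E h" and eq1: "p ! 1 = q ! 1"
  shows "Suc i < length p \<Longrightarrow> Suc i < length q \<Longrightarrow> p ! i = q ! i \<and> p ! Suc i = q ! Suc i"
proof (induction i)
  case 0
  then show ?case using legs_basic[OF p] legs_basic[OF q] eq1 by simp
next
  case (Suc i)
  then have IH: "p ! i = q ! i" "p ! Suc i = q ! Suc i" by auto
  note P = legs_basic[OF p] and Q = legs_basic[OF q]
  let ?w = "p ! Suc i"
  have wV: "?w \<in> V" using P(1) Suc.prems unfolding is_path_def by (meson Suc_lessD nth_mem subsetD)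
  have "p \<noteq> []" using Suc.prems by auto
  then have "?w \<noteq> p ! 0" using nth_eq_iff_index_eq[OF P(5), of "Suc i" 0] Suc.prems by simp
  then have "?w \<noteq> h" using P(3) by simp
  then have "card (nbr V E ?w) \<le> 2" using deg2 wV degree_nbr[OF s] by auto
  moreover have a: "p ! i \<in> nbr V E ?w"
  proof -
    have "p ! Suc i \<in> nbr V E (p ! i)" using path_nbr[OF P(1)] Suc.prems by simp
    moreover have "p ! i \<in> V" using P(1) Suc.prems unfolding is_path_def by (meson Suc_lessD nth_mem subsetD)
    ultimately show ?thesis using nbr_sym by metis
  qed
  moreover have b: "p ! Suc (Suc i) \<in> nbr V E ?w" using path_nbr[OF P(1)] Suc.prems by simp
  moreover have c: "q ! Suc (Suc i) \<in> nbr V E ?w" using path_nbr[OF Q(1)] Suc.prems IH by simp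
  moreover have "p ! i \<noteq> p ! Suc (Suc i)" using P(5) Suc.prems by (simp add: nth_eq_iff_index_eq)
  moreover have "q ! i \<noteq> q ! Suc (Suc i)" using Q(5) Suc.prems by (simp add: nth_eq_iff_index_eq)
  ultimately have "p ! Suc (Suc i) = q ! Suc (Suc i)"
  proof -
    assume cd: "card (nbr V E ?w) \<le> 2" and n1: "p ! i \<noteq> p ! Suc (Suc i)" and n2: "q ! i \<noteq> q ! Suc (Suc i)"
    show ?thesis
    proof (rule ccontr)
      assume "p ! Suc (Suc i) \<noteq> q ! Suc (Suc i)"
      then have "card (nbr V E ?w) \<ge> 3" using three_card[OF fin_nbr[OF s] a b c] n1 n2 IH(1) by simp
      then show False using cd by simp
    qed
  qed
  then show ?case using IH by simp
qed

lemma legs_len_le: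
  assumes s: "simple_graph V E" and deg2: "\<forall>v\<in>V-{h}. degree E v \<le> 2"
    and p: "p \<in> legs V E h" and q: "q \<in> legs V E h" and eq1: "p ! 1 = q ! 1"
  shows "\<not> length p < length q"
proof
  assume lt: "length p < length q"
  note P = legs_basic[OF p] and Q = legs_basic[OF q]
  define m where "m = length p - 1"
  have m1: "m \<ge> 1" "Suc (m - 1) = m" "m < length p" "Suc m < length q" using P(2) lt unfolding m_def by auto
  have "p ! m = q ! m" using legs_agree[OF s deg2 p q eq1, of "m - 1"] m1 by simp
  then have lm: "last p = q ! m" using P(6) unfolding m_def by simp
  have "q ! m \<in> nbr V E (q ! (m - 1))" using path_nbr[OF Q(1), of "m - 1"] m1 by simp
  moreover have "q ! (m - 1) \<in> V"
  proof -
    have "m - 1 < length q" using m1 by simp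
    then have "q ! (m - 1) \<in> set q" by (rule nth_mem)
    then show ?thesis using Q(1) unfolding is_path_def by blast
  qed
  ultimately have x: "q ! (m - 1) \<in> nbr V E (q ! m)" using nbr_sym by metis
  have y: "q ! Suc m \<in> nbr V E (q ! m)" using path_nbr[OF Q(1)] m1 by simp
  have "q ! (m - 1) \<noteq> q ! Suc m" using Q(5) m1 by (simp add: nth_eq_iff_index_eq)
  then have "card (nbr V E (q ! m)) \<ge> 2" using two_card[OF fin_nbr[OF s] x y] by simp
  then show False using P(4) lm degree_nbr[OF s] by simp
qed

lemma legs_inj:
  assumes s: "simple_graph V E" and deg2: "\<forall>v\<in>V-{h}. degree E v \<le> 2"
  shows "inj_on (\<lambda>p. p ! 1) (legs V E h)"
proof (rule inj_onI)
  fix p q assume p: "p \<in> legs V E h" and q: "q \<in> legs V E h" and eq1: "p ! 1 = q ! 1"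
  have len: "length p = length q" using legs_len_le[OF s deg2 p q eq1] legs_len_le[OF s deg2 q p eq1[symmetric]]
    by simp
  show "p = q"
  proof (rule nth_equalityI[OF len])
    fix i assume i: "i < length p"
    show "p ! i = q ! i"
    proof (cases "Suc i < length p")
      case True then show ?thesis using legs_agree[OF s deg2 p q eq1] len by simp
    next
      case False
      then have "i \<ge> 1" "Suc (i - 1) = i" "Suc (i - 1) < length p" using i legs_basic(2)[OF p] by auto
      then show ?thesis using legs_agree[OF s deg2 p q eq1, of "i - 1"] len by simp
    qed
  qed
qed

lemma legs_surj:
  assumes t: "is_tree V E" and h: "h \<in> V" and c: "c \<in> nbr V E h"
  shows "\<exists>p\<in>legs V E h. p ! 1 = c"
proof -
  have s: "simple_graph V E" using t tree_simple by blast
  have nc: "\<not> has_cycle V E" using t tree_nc by blast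
  have fV: "finite V" using sg_finV[OF s] .
  have e: "{h,c} \<in> E" "c \<in> V" using c unfolding nbr_def by auto
  have p0: "is_path V E [h,c]" using path2[OF e(1) h e(2)] sg_edge2[OF s e(1)] by simp
  define Q where "Q p = (length p \<ge> 2 \<and> p ! 0 = h \<and> p ! 1 = c)" for p :: "'a list"
  have "Q [h,c]" unfolding Q_def by simp
  then obtain p where p: "is_path V E p" "Q p" and mx: "\<forall>q. is_path V E q \<and> Q q \<longrightarrow> length q \<le> length p"
    using longest_path[OF fV p0, of Q] by blast
  have l2: "length p \<ge> 2" using p(2) unfolding Q_def by simp
  have "nbr V E (last p) = {p ! (length p - 2)}"
  proof (rule maximal_path_leaf[OF s nc p(1) l2])
    fix w assume w: "w \<in> V" "w \<notin> set p" "{last p, w} \<in> E"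
    have pw: "is_path V E (p @ [w])" by (rule path_extend[OF p(1) w])
    have "p \<noteq> []" using l2 by auto
    then have "Q (p @ [w])" using p(2) l2 unfolding Q_def by (simp add: nth_append)
    then have "length (p @ [w]) \<le> length p" using mx[rule_format, of "p @ [w]"] pw by simp
    then show False by simp
  qed
  then have "degree E (last p) = 1" using degree_nbr[OF s] by simp
  moreover have "hd p = h" using p(2) l2 unfolding Q_def by (cases p) auto
  ultimately have "p \<in> legs V E h" unfolding legs_def using p(1) l2 by simp
  moreover have "p ! 1 = c" using p(2) unfolding Q_def by simp
  ultimately show ?thesis by blast
qed

lemma legs_card:
  assumes t: "is_tree V E" and h: "h \<in> V" and deg2: "\<forall>v\<in>V-{h}. degree E v \<le> 2"
  shows "card (legs V E h) = degree E h"
proof -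
  have s: "simple_graph V E" using t tree_simple by blast
  have "bij_betw (\<lambda>p. p ! 1) (legs V E h) (nbr V E h)"
    unfolding bij_betw_def
  proof
    show "inj_on (\<lambda>p. p ! 1) (legs V E h)" by (rule legs_inj[OF s deg2])
    show "(\<lambda>p. p ! 1) ` legs V E h = nbr V E h"
    proof
      show "(\<lambda>p. p ! 1) ` legs V E h \<subseteq> nbr V E h"
      proof
        fix x assume "x \<in> (\<lambda>p. p ! 1) ` legs V E h"
        then obtain p where p: "p \<in> legs V E h" "x = p ! 1" by blast
        note P = legs_basic[OF p(1)]
        have "p ! 1 \<in> nbr V E (hd p)" using path_second[OF P(1) P(2)] .
        moreover have "hd p = h" using p(1) unfolding legs_def by simp
        ultimately show "x \<in> nbr V E h" using p by simp
      qed
      show "nbr V E h \<subseteq> (\<lambda>p. p ! 1) ` legs V E h"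
        using legs_surj[OF t h] by (metis image_eqI subsetI)
    qed
  qed
  then show ?thesis using degree_nbr[OF s] bij_betw_same_card by metis
qed

lemma spider_iff:
  assumes t: "is_tree V E" and c: "card V \<ge> 3" and h: "h \<in> V" and dh: "degree E h = D" and D3: "D \<ge> 3"
  shows "spider_long_legs V E D \<longleftrightarrow> (leafnb V E h = 0 \<and> (\<forall>v\<in>V-{h}. degree E v \<le> 2))"
proof
  have s: "simple_graph V E" using t tree_simple by blast
  have fV: "finite V" using sg_finV[OF s] .
  assume sp: "spider_long_legs V E D"
  then obtain h' where h': "h' \<in> V" "degree E h' > 2" "\<forall>p\<in>legs V E h'. length p - 1 \<ge> 2"
    and cd: "card {v \<in> V. degree E v > 2} \<le> 1"
    unfolding spider_long_legs_def spider_def by blast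
  have fS: "finite {v \<in> V. degree E v > 2}" using fV by simp
  have one: "\<And>a b. a \<in> {v \<in> V. degree E v > 2} \<Longrightarrow> b \<in> {v \<in> V. degree E v > 2} \<Longrightarrow> a = b"
    using cd card_le_Suc0_iff_eq[OF fS] by simp
  have hh: "h' = h" using one[of h' h] h' h dh D3 by simp
  have deg: "\<forall>v\<in>V-{h}. degree E v \<le> 2"
  proof
    fix v assume v: "v \<in> V - {h}"
    show "degree E v \<le> 2"
    proof (rule ccontr)
      assume "\<not> degree E v \<le> 2"
      then have "v = h" using one[of v h] v h dh D3 by simp
      then show False using v by simp
    qed
  qed
  have "{u\<in>nbr V E h. degree E u = 1} = {}"
  proof (rule ccontr)
    assume "{u\<in>nbr V E h. degree E u = 1} \<noteq> {}"
    then obtain u where u: "u \<in> nbr V E h" "degree E u = 1" by blast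
    have e: "{h,u} \<in> E" "u \<in> V" using u unfolding nbr_def by auto
    have "is_path V E [h,u]" using path2[OF e(1) h e(2)] sg_edge2[OF s e(1)] by simp
    then have "[h,u] \<in> legs V E h" unfolding legs_def using u by simp
    then show False using h'(3) hh by force
  qed
  then have "leafnb V E h = 0" unfolding leafnb_def by (metis card.empty)
  then show "leafnb V E h = 0 \<and> (\<forall>v\<in>V-{h}. degree E v \<le> 2)" using deg by simp
next
  have s: "simple_graph V E" using t tree_simple by blast
  have fV: "finite V" using sg_finV[OF s] .
  assume a: "leafnb V E h = 0 \<and> (\<forall>v\<in>V-{h}. degree E v \<le> 2)"
  have empty: "{u\<in>nbr V E h. degree E u = 1} = {}"
    using a fin_nbr[OF s] unfolding leafnb_def by simp
  have "{v \<in> V. degree E v > 2} \<subseteq> {h}" using a by force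
  then have "card {v \<in> V. degree E v > 2} \<le> 1" using card_mono[of "{h}"] by fastforce
  then have sp: "spider V E" unfolding spider_def using t by simp
  have lc: "card (legs V E h) = D" using legs_card[OF t h] a dh by simp
  have "\<forall>p\<in>legs V E h. length p - 1 \<ge> 2"
  proof
    fix p assume p: "p \<in> legs V E h"
    note P = legs_basic[OF p]
    show "length p - 1 \<ge> 2"
    proof (rule ccontr)
      assume "\<not> length p - 1 \<ge> 2"
      then have l: "length p = 2" using P(2) by simp
      have "p ! 1 \<in> nbr V E (hd p)" using path_second[OF P(1) P(2)] .
      moreover have "hd p = h" using p unfolding legs_def by simp
      moreover have "last p = p ! 1" using P(6) l by simp
      ultimately have "p ! 1 \<in> {u\<in>nbr V E h. degree E u = 1}" using P(4) by simp
      then show False using empty by blast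
    qed
  qed
  moreover have "degree E h > 2" using dh D3 by simp
  ultimately show "spider_long_legs V E D" unfolding spider_long_legs_def using sp h lc by blast
qed

lemma T_edge_iff: "{i,j} \<in> T_nD_E n D \<longleftrightarrow> (i = 0 \<and> 1 \<le> j \<and> j \<le> D) \<or> (j = 0 \<and> 1 \<le> i \<and> i \<le> D)
   \<or> (D < j \<and> j < n \<and> i = j - D) \<or> (D < i \<and> i < n \<and> j = i - D)"
  unfolding T_nD_E_def by (auto simp: doubleton_eq_iff)

definition NT :: "nat \<Rightarrow> nat \<Rightarrow> nat \<Rightarrow> nat set" where
  "NT n D j = {i \<in> {..<n}. {j,i} \<in> T_nD_E n D}"

lemma NT_card:
  assumes j: "j < n" and D: "D + 2 \<le> n" "n \<le> 2 * D + 1" "D \<ge> 1"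
  shows "card (NT n D j) = (if j = 0 then D else if j \<le> D \<and> j + D < n then 2 else 1)"
proof -
  consider "j = 0" | "1 \<le> j" "j \<le> D" "j + D < n" | "1 \<le> j" "j \<le> D" "\<not> j + D < n" | "D < j" by linarith
  then show ?thesis
  proof cases
    case 1
    have "NT n D j = {1..D}" unfolding NT_def T_edge_iff using 1 D by auto
    then show ?thesis using 1 by simp
  next
    case 2
    have "NT n D j = {0, j + D}" unfolding NT_def T_edge_iff using 2 D by auto
    then show ?thesis using 2 by simp
  next
    case 3
    have "NT n D j = {0}" unfolding NT_def T_edge_iff using 3 D by auto
    then show ?thesis using 3 by simp
  next
    case 4
    have "NT n D j = {j - D}" unfolding NT_def T_edge_iff using 4 D j by auto
    then show ?thesis using 4 by simp
  qed
qed

lemma iso_img: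
  assumes bij: "bij_betw f V {..<n}"
    and pres: "\<forall>u\<in>V. \<forall>v\<in>V. {u, v} \<in> E \<longleftrightarrow> {f u, f v} \<in> T_nD_E n D"
    and v: "v \<in> V"
  shows "f ` nbr V E v = NT n D (f v)"
proof
  show "f ` nbr V E v \<subseteq> NT n D (f v)"
  proof
    fix i assume "i \<in> f ` nbr V E v"
    then obtain u where u: "u \<in> V" "{v,u} \<in> E" "i = f u" unfolding nbr_def by blast
    then have "{f v, f u} \<in> T_nD_E n D" using pres v by blast
    moreover have "f u < n" using bij u unfolding bij_betw_def by auto
    ultimately show "i \<in> NT n D (f v)" unfolding NT_def using u by simp
  qed
  show "NT n D (f v) \<subseteq> f ` nbr V E v"
  proof
    fix i assume i: "i \<in> NT n D (f v)"
    then have "i \<in> f ` V" using bij unfolding NT_def bij_betw_def by auto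
    then obtain u where u: "u \<in> V" "i = f u" by blast
    then have "{f v, f u} \<in> T_nD_E n D" using i unfolding NT_def by simp
    then have "{v,u} \<in> E" using pres v u by blast
    then show "i \<in> f ` nbr V E v" unfolding nbr_def using u by blast
  qed
qed

lemma iso_struct:
  assumes s: "simple_graph V E" and iso: "graph_iso V E (T_nD_V n D) (T_nD_E n D)"
    and h: "h \<in> V" and dh: "degree E h = D" and D3: "D \<ge> 3" and D: "D + 2 \<le> n" "n \<le> 2 * D + 1"
  shows "leafnb V E h = 2 * D + 1 - n \<and> (\<forall>v\<in>V-{h}. degree E v \<le> 2)"
proof -
  obtain f where bij: "bij_betw f V {..<n}" and pres: "\<forall>u\<in>V. \<forall>v\<in>V. {u, v} \<in> E \<longleftrightarrow> {f u, f v} \<in> T_nD_E n D"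
    using iso unfolding graph_iso_def T_nD_V_def by blast
  have inj: "inj_on f V" using bij unfolding bij_betw_def by simp
  have fl: "\<And>v. v \<in> V \<Longrightarrow> f v < n" using bij unfolding bij_betw_def by auto
  have deg: "\<And>v. v \<in> V \<Longrightarrow> degree E v = card (NT n D (f v))"
  proof -
    fix v assume v: "v \<in> V"
    have "nbr V E v \<subseteq> V" unfolding nbr_def by auto
    then have "card (f ` nbr V E v) = card (nbr V E v)" using inj by (meson card_image inj_on_subset)
    then show "degree E v = card (NT n D (f v))" using iso_img[OF bij pres v] degree_nbr[OF s] by simp
  qed
  have degc: "\<And>v. v \<in> V \<Longrightarrow> degree E v = (if f v = 0 then D else if f v \<le> D \<and> f v + D < n then 2 else 1)"
  proof -
    fix v assume v: "v \<in> V"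
    show "degree E v = (if f v = 0 then D else if f v \<le> D \<and> f v + D < n then 2 else 1)"
      using deg[OF v] NT_card[OF fl[OF v] D] D3 by simp
  qed
  have fh: "f h = 0"
  proof (rule ccontr)
    assume "f h \<noteq> 0"
    then have "degree E h \<le> 2" using degc[OF h] by simp
    then show False using dh D3 by simp
  qed
  have d2: "\<forall>v\<in>V-{h}. degree E v \<le> 2"
  proof
    fix v assume v: "v \<in> V - {h}"
    then have "f v \<noteq> f h" using inj h unfolding inj_on_def by blast
    then show "degree E v \<le> 2" using degc[of v] v fh by simp
  qed
  let ?Lf = "{u\<in>nbr V E h. degree E u = 1}"
  have NT0: "NT n D 0 = {1..D}" unfolding NT_def T_edge_iff using D by auto
  have img0: "f ` nbr V E h = {1..D}" using iso_img[OF bij pres h] fh NT0 by simp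
  have "f ` ?Lf = {j \<in> {1..D}. \<not> j + D < n}"
  proof
    show "f ` ?Lf \<subseteq> {j \<in> {1..D}. \<not> j + D < n}"
    proof
      fix j assume "j \<in> f ` ?Lf"
      then obtain u where u: "u \<in> nbr V E h" "degree E u = 1" "j = f u" by blast
      have uV: "u \<in> V" using u unfolding nbr_def by simp
      have j1: "j \<in> {1..D}" using img0 u by blast
      have fu0: "f u \<noteq> 0" using j1 u(3) by simp
      have "degree E u = (if j \<le> D \<and> j + D < n then 2 else 1)" using degc[OF uV] fu0 u(3) by simp
      then have "\<not> (j \<le> D \<and> j + D < n)" using u(2) by (cases "j \<le> D \<and> j + D < n") simp_all
      then show "j \<in> {j \<in> {1..D}. \<not> j + D < n}" using j1 by simp
    qed
    show "{j \<in> {1..D}. \<not> j + D < n} \<subseteq> f ` ?Lf"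
    proof
      fix j assume j: "j \<in> {j \<in> {1..D}. \<not> j + D < n}"
      then have "j \<in> f ` nbr V E h" using img0 by simp
      then obtain u where u: "u \<in> nbr V E h" "j = f u" by blast
      have uV: "u \<in> V" using u unfolding nbr_def by simp
      have "degree E u = 1" using degc[OF uV] u j by simp
      then show "j \<in> f ` ?Lf" using u by blast
    qed
  qed
  moreover have "{j \<in> {1..D}. \<not> j + D < n} = {n - D..D}" using D D3 by auto
  moreover have "card (f ` ?Lf) = card ?Lf"
  proof -
    have "?Lf \<subseteq> V" unfolding nbr_def by auto
    then show ?thesis using inj by (meson card_image inj_on_subset)
  qed
  ultimately have "leafnb V E h = card {n - D..D}" unfolding leafnb_def by simp
  then have "leafnb V E h = 2 * D + 1 - n" using D by simp
  then show ?thesis using d2 by simp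
qed

lemma path5: assumes "{a,b} \<in> E" "{b,c} \<in> E" "{c,d} \<in> E" "{d,e} \<in> E"
  "a \<in> V" "b \<in> V" "c \<in> V" "d \<in> V" "e \<in> V" "distinct [a,b,c,d,e]"
  shows "is_path V E [a,b,c,d,e]"
  unfolding is_path_def
proof (intro conjI allI impI)
  fix i assume "Suc i < length [a,b,c,d,e]"
  then have "i = 0 \<or> i = 1 \<or> i = 2 \<or> i = 3" by auto
  then show "{[a,b,c,d,e] ! i, [a,b,c,d,e] ! Suc i} \<in> E" using assms by auto
qed (use assms in auto)

lemma struct_iso:
  assumes t: "is_tree V E" and c: "card V = n" and h: "h \<in> V" and dh: "degree E h = D" and D3: "D \<ge> 3"
    and D: "D + 2 \<le> n" "n \<le> 2 * D + 1"
    and L: "leafnb V E h = 2 * D + 1 - n" and d2: "\<forall>v\<in>V-{h}. degree E v \<le> 2"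
  shows "graph_iso V E (T_nD_V n D) (T_nD_E n D)"
proof -
  have s: "simple_graph V E" using t tree_simple by blast
  have nc: "\<not> has_cycle V E" using t tree_nc by blast
  have fV: "finite V" using sg_finV[OF s] .
  define N where "N = nbr V E h"
  define C where "C = {u\<in>N. degree E u \<ge> 2}"
  define Lf where "Lf = {u\<in>N. degree E u = 1}"
  define X where "X = V - {h} - N"
  define k where "k = n - 1 - D"
  define x where "x = xf V E h"
  have c3: "card V \<ge> 3" using c D D3 by simp
  have d1: "\<And>v. v \<in> V \<Longrightarrow> degree E v \<ge> 1" using deg_pos[OF t] c3 by simp
  have NV: "N \<subseteq> V" unfolding N_def nbr_def by auto
  have hN: "h \<notin> N" unfolding N_def nbr_def using sg_edge2[OF s] by blast
  have fN: "finite N" using fin_nbr[OF s] unfolding N_def .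
  have cardN: "card N = D" using degree_nbr[OF s] dh unfolding N_def by simp
  have cardLf: "card Lf = 2 * D + 1 - n" using L unfolding leafnb_def Lf_def N_def by simp
  have NCL: "N = C \<union> Lf"
  proof
    show "N \<subseteq> C \<union> Lf"
    proof
      fix u assume u: "u \<in> N"
      then have "degree E u \<ge> 1" using d1 NV by blast
      then have "degree E u = 1 \<or> degree E u \<ge> 2" by linarith
      then show "u \<in> C \<union> Lf" using u unfolding C_def Lf_def by blast
    qed
    show "C \<union> Lf \<subseteq> N" unfolding C_def Lf_def by blast
  qed
  have CLd: "C \<inter> Lf = {}" unfolding C_def Lf_def by auto
  have cardC: "card C = k"
  proof -
    have "card N = card C + card Lf" using NCL CLd fN by (simp add: card_Un_disjoint)
    then show ?thesis using cardN cardLf D unfolding k_def by simp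
  qed
  have cardX: "card X = k"
  proof -
    have "N \<subseteq> V - {h}" using NV hN by auto
    then have "card X = card (V - {h}) - card N" unfolding X_def using fV by (simp add: card_Diff_subset fN)
    then show ?thesis using cardN c h fV unfolding k_def by simp
  qed
  have Cd: "\<And>c. c \<in> C \<Longrightarrow> c \<in> nbr V E h \<and> degree E c \<ge> 2" unfolding C_def N_def by simp
  have xinj: "inj_on x C" using xf_inj[OF t h] unfolding x_def C_def N_def .
  have xC: "x ` C = X"
  proof (rule card_subset_eq)
    show "finite X" unfolding X_def using fV by simp
    show "x ` C \<subseteq> X"
    proof
      fix y assume "y \<in> x ` C"
      then obtain c where cC: "c \<in> C" "y = x c" by blast
      note P = xf_props[OF t h conjunct1[OF Cd[OF cC(1)]] conjunct2[OF Cd[OF cC(1)]]]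
      show "y \<in> X" unfolding X_def N_def using P cC(2) unfolding x_def by simp
    qed
    show "card (x ` C) = card X" using card_image[OF xinj] cardC cardX by simp
  qed
  have C2: "\<And>c. c \<in> C \<Longrightarrow> nbr V E c = {h, x c}"
  proof -
    fix c assume cC: "c \<in> C"
    note P = xf_props[OF t h conjunct1[OF Cd[OF cC]] conjunct2[OF Cd[OF cC]]]
    have cV: "c \<in> V" "c \<noteq> h" using cC NV hN unfolding C_def by auto
    have a: "h \<in> nbr V E c" using nbr_sym[OF conjunct1[OF Cd[OF cC]] h] .
    have b: "x c \<in> nbr V E c" using P(1) unfolding x_def .
    have ne: "h \<noteq> x c" using P(2) unfolding x_def by simp
    have le: "card (nbr V E c) \<le> 2" using d2 cV degree_nbr[OF s] by simp
    show "nbr V E c = {h, x c}"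
    proof (rule card_subset_eq[symmetric])
      show "finite (nbr V E c)" by (rule fin_nbr[OF s])
      show "{h, x c} \<subseteq> nbr V E c" using a b by simp
      show "card {h, x c} = card (nbr V E c)" using le two_card[OF fin_nbr[OF s] a b ne] ne by simp
    qed
  qed
  have X1: "\<And>y. y \<in> X \<Longrightarrow> degree E y = 1"
  proof (rule ccontr)
    fix w assume wX: "w \<in> X" and n1: "degree E w \<noteq> 1"
    have wV: "w \<in> V" "w \<noteq> h" "w \<notin> N" using wX unfolding X_def by auto
    have "degree E w \<le> 2" using d2 wV by simp
    then have "degree E w = 2" using n1 d1[OF wV(1)] by simp
    then have dw: "card (nbr V E w) = 2" using degree_nbr[OF s] by simp
    obtain cc where cc: "cc \<in> C" "w = x cc" using xC wX by blast
    have ccw: "cc \<in> nbr V E w"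
    proof -
      have "x cc \<in> nbr V E cc" using C2[OF cc(1)] by simp
      moreover have "cc \<in> V" using cc NV unfolding C_def by auto
      ultimately show ?thesis using nbr_sym cc(2) by metis
    qed
    obtain y where y: "y \<in> nbr V E w" "y \<noteq> cc" using card_ge2_other[OF fin_nbr[OF s], of w cc] dw by auto
    have yV: "y \<in> V" "{w,y} \<in> E" using y unfolding nbr_def by auto
    have yh: "y \<noteq> h"
    proof
      assume "y = h"
      then have "w \<in> nbr V E h" using nbr_sym[OF y(1) wV(1)] by simp
      then show False using wV unfolding N_def by simp
    qed
    show False
    proof (cases "y \<in> N")
      case True
      have "w \<in> nbr V E y" using nbr_sym[OF y(1) wV(1)] .
      moreover have "h \<in> nbr V E y" using nbr_sym[OF True[unfolded N_def] h] .
      ultimately have "card (nbr V E y) \<ge> 2" using two_card[OF fin_nbr[OF s]] wV by blast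
      then have yC: "y \<in> C" using True degree_nbr[OF s] unfolding C_def by simp
      then have "w \<in> {h, x y}" using C2[OF yC] \<open>w \<in> nbr V E y\<close> by simp
      then have "x y = x cc" using wV cc by simp
      then have "y = cc" using xinj yC cc(1) unfolding inj_on_def by blast
      then show False using y by simp
    next
      case False
      then have "y \<in> X" using yV yh unfolding X_def by simp
      then obtain c' where c': "c' \<in> C" "y = x c'" using xC by blast
      have "c' \<noteq> cc"
      proof
        assume "c' = cc" then have "y = w" using c' cc by simp
        then show False using sg_edge2[OF s yV(2)] by simp
      qed
      have cc': "cc \<in> N" "c' \<in> N" using cc c' unfolding C_def by auto
      have e1: "{h, cc} \<in> E" "{h, c'} \<in> E" using cc' unfolding N_def nbr_def by auto
      have e2: "{cc, w} \<in> E"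
      proof -
        have "w \<in> nbr V E cc" using C2[OF cc(1)] cc(2) by simp
        then show ?thesis unfolding nbr_def by simp
      qed
      have e3: "{y, c'} \<in> E"
      proof -
        have "y \<in> nbr V E c'" using C2[OF c'(1)] c'(2) by simp
        then show ?thesis unfolding nbr_def by (simp add: insert_commute)
      qed
      have Vs: "cc \<in> V" "c' \<in> V" using cc' NV by auto
      have wy: "w \<noteq> y" using sg_edge2[OF s yV(2)] by simp
      have "distinct [h, cc, w, y, c']"
        using hN cc' wV \<open>y \<in> X\<close> \<open>c' \<noteq> cc\<close> wy yh unfolding X_def by auto
      then have "is_path V E [h, cc, w, y, c']"
        using path5[OF e1(1) e2 yV(2) e3 h Vs(1) wV(1) yV(1) Vs(2)] by simp
      moreover have "{last [h, cc, w, y, c'], hd [h, cc, w, y, c']} \<in> E" using e1(2) by (simp add: insert_commute)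
      ultimately show False using nc unfolding has_cycle_def by force
    qed
  qed
  have Echar: "\<And>a b. {a,b} \<in> E \<Longrightarrow> (a = h \<and> b \<in> N) \<or> (b = h \<and> a \<in> N) \<or> (a \<in> C \<and> b = x a) \<or> (b \<in> C \<and> a = x b)"
  proof -
    fix a b assume e: "{a,b} \<in> E"
    have ab: "a \<in> V" "b \<in> V" "a \<noteq> b" using sg_edge2[OF s e] by auto
    have ba: "b \<in> nbr V E a" "a \<in> nbr V E b" using edge_nbr[OF e s] edge_nbr'[OF e s] by auto
    show "(a = h \<and> b \<in> N) \<or> (b = h \<and> a \<in> N) \<or> (a \<in> C \<and> b = x a) \<or> (b \<in> C \<and> a = x b)"
    proof (cases "a = h")
      case True then show ?thesis using ba unfolding N_def by simp
    next
      case ah: False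
      show ?thesis
      proof (cases "b = h")
        case True then show ?thesis using ba unfolding N_def by simp
      next
        case bh: False
        show ?thesis
        proof (cases "a \<in> N")
          case True
          have "h \<in> nbr V E a" using nbr_sym[OF True[unfolded N_def] h] .
          then have "card (nbr V E a) \<ge> 2" using two_card[OF fin_nbr[OF s] _ ba(1)] bh by blast
          then have aC: "a \<in> C" using True degree_nbr[OF s] unfolding C_def by simp
          then have "b = x a" using C2[OF aC] ba(1) bh by simp
          then show ?thesis using aC by simp
        next
          case aN: False
          show ?thesis
          proof (cases "b \<in> N")
            case True
            have "h \<in> nbr V E b" using nbr_sym[OF True[unfolded N_def] h] .
            then have "card (nbr V E b) \<ge> 2" using two_card[OF fin_nbr[OF s] _ ba(2)] ah by blast
            then have bC: "b \<in> C" using True degree_nbr[OF s] unfolding C_def by simp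
            then have "a = x b" using C2[OF bC] ba(2) ah by simp
            then show ?thesis using bC by simp
          next
            case False
            then have "a \<in> X" "b \<in> X" using aN ab ah bh unfolding X_def by auto
            then show ?thesis using no_leaf_leaf[OF t c3 e] X1 by blast
          qed
        qed
      qed
    qed
  qed
  have Eback: "\<And>a b. (a = h \<and> b \<in> N) \<or> (b = h \<and> a \<in> N) \<or> (a \<in> C \<and> b = x a) \<or> (b \<in> C \<and> a = x b) \<Longrightarrow> {a,b} \<in> E"
  proof -
    fix a b assume "(a = h \<and> b \<in> N) \<or> (b = h \<and> a \<in> N) \<or> (a \<in> C \<and> b = x a) \<or> (b \<in> C \<and> a = x b)"
    then consider "a = h" "b \<in> N" | "b = h" "a \<in> N" | "a \<in> C" "b = x a" | "b \<in> C" "a = x b" by blast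
    then show "{a,b} \<in> E"
    proof cases
      case 1 then show ?thesis unfolding N_def nbr_def by simp
    next
      case 2 then show ?thesis unfolding N_def nbr_def by (simp add: insert_commute)
    next
      case 3 then have "b \<in> nbr V E a" using C2 by simp
      then show ?thesis unfolding nbr_def by simp
    next
      case 4 then have "a \<in> nbr V E b" using C2 by simp
      then show ?thesis unfolding nbr_def by (simp add: insert_commute)
    qed
  qed
  have kD: "k \<le> D" "D + k + 1 = n" "k \<ge> 1" using D unfolding k_def by auto
  have cLf': "card Lf = D - k" using cardLf D unfolding k_def by simp
  obtain gC where gC: "bij_betw gC {0..<k} C" using ex_bij_betw_nat_finite[of C] cardC fN NCL
    by (metis finite_Un)
  obtain gL where gL: "bij_betw gL {0..<D - k} Lf" using ex_bij_betw_nat_finite[of Lf] cLf' fN NCL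
    by (metis finite_Un)
  define F where "F i = (if i = 0 then h else if i \<le> k then gC (i - 1) else if i \<le> D then gL (i - 1 - k)
      else x (gC (i - 1 - D)))" for i
  have F0: "F 0 = h" unfolding F_def by simp
  have FC: "\<And>i. 1 \<le> i \<Longrightarrow> i \<le> k \<Longrightarrow> F i = gC (i - 1) \<and> F i \<in> C"
  proof -
    fix i assume i: "1 \<le> i" "i \<le> k"
    then have "i - 1 \<in> {0..<k}" by simp
    then have "gC (i - 1) \<in> C" using gC unfolding bij_betw_def by blast
    then show "F i = gC (i - 1) \<and> F i \<in> C" unfolding F_def using i by simp
  qed
  have FL: "\<And>i. k < i \<Longrightarrow> i \<le> D \<Longrightarrow> F i \<in> Lf"
  proof -
    fix i assume i: "k < i" "i \<le> D"
    then have "i - 1 - k \<in> {0..<D - k}" by simp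
    then have "gL (i - 1 - k) \<in> Lf" using gL unfolding bij_betw_def by blast
    then show "F i \<in> Lf" unfolding F_def using i by simp
  qed
  have FX: "\<And>i. D < i \<Longrightarrow> i < n \<Longrightarrow> F i = x (F (i - D)) \<and> F i \<in> X"
  proof -
    fix i assume i: "D < i" "i < n"
    have a: "1 \<le> i - D" "i - D \<le> k" using i kD by auto
    have b: "i - D - 1 = i - 1 - D" by simp
    have "F i = x (gC (i - 1 - D))" unfolding F_def using i kD by simp
    moreover have "F (i - D) = gC (i - 1 - D)" using FC[OF a] b by simp
    moreover have "x (gC (i - 1 - D)) \<in> X" using FC[OF a] b xC by auto
    ultimately show "F i = x (F (i - D)) \<and> F i \<in> X" by simp
  qed
  have Fimg: "F ` {..<n} = V"
  proof
    show "F ` {..<n} \<subseteq> V"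
    proof
      fix v assume "v \<in> F ` {..<n}"
      then obtain i where i: "i < n" "v = F i" by blast
      consider "i = 0" | "1 \<le> i" "i \<le> k" | "k < i" "i \<le> D" | "D < i" by linarith
      then show "v \<in> V"
      proof cases
        case 1 then show ?thesis using i F0 h by simp
      next
        case 2 then show ?thesis using i FC NCL NV by blast
      next
        case 3 then show ?thesis using i FL NCL NV by blast
      next
        case 4 then show ?thesis using i FX unfolding X_def by blast
      qed
    qed
    show "V \<subseteq> F ` {..<n}"
    proof
      fix v assume v: "v \<in> V"
      consider "v = h" | "v \<in> C" | "v \<in> Lf" | "v \<in> X" using v NCL unfolding X_def by blast
      then show "v \<in> F ` {..<n}"
      proof cases
        case 1 then show ?thesis using F0 kD by force
      next
        case 2
        then obtain j where j: "j < k" "v = gC j" using gC unfolding bij_betw_def by force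
        then have "F (j + 1) = v" using FC[of "j + 1"] by simp
        moreover have "j + 1 < n" using j kD by simp
        ultimately show ?thesis by force
      next
        case 3
        then obtain j where j: "j < D - k" "v = gL j" using gL unfolding bij_betw_def by force
        then have "j + 1 + k \<le> D" "\<not> j + 1 + k \<le> k" "j + 1 + k \<noteq> 0" by auto
        then have "F (j + 1 + k) = v" unfolding F_def using j by simp
        moreover have "j + 1 + k < n" using j kD by simp
        ultimately show ?thesis by force
      next
        case 4
        then obtain cc where cc: "cc \<in> C" "v = x cc" using xC by blast
        then obtain j where j: "j < k" "cc = gC j" using gC unfolding bij_betw_def by force
        have "F (j + 1 + D) = x (F (j + 1))" using FX[of "j + 1 + D"] j kD by simp
        also have "F (j + 1) = cc" using FC[of "j + 1"] j by simp
        finally have "F (j + 1 + D) = v" using cc by simp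
        moreover have "j + 1 + D < n" using j kD by simp
        ultimately show ?thesis by force
      qed
    qed
  qed
  have Finj: "inj_on F {..<n}"
    by (rule eq_card_imp_inj_on) (use Fimg c in simp_all)
  have Fbij: "bij_betw F {..<n} V" unfolding bij_betw_def using Finj Fimg by simp
  have R1: "\<And>i. i < n \<Longrightarrow> F i = h \<longleftrightarrow> i = 0"
    using Finj F0 kD unfolding inj_on_def by (metis lessThan_iff zero_less_iff_neq_zero add_gr_0 zero_less_one)
  have XN: "X \<inter> N = {}" unfolding X_def by auto
  have R2: "\<And>i. i < n \<Longrightarrow> F i \<in> N \<longleftrightarrow> 1 \<le> i \<and> i \<le> D"
  proof -
    fix i assume i: "i < n"
    consider "i = 0" | "1 \<le> i" "i \<le> k" | "k < i" "i \<le> D" | "D < i" by linarith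
    then show "F i \<in> N \<longleftrightarrow> 1 \<le> i \<and> i \<le> D"
    proof cases
      case 1 then show ?thesis using F0 hN by simp
    next
      case 2 then have "F i \<in> N" using FC[OF 2] NCL by blast
      then show ?thesis using 2 kD by simp
    next
      case 3 then have "F i \<in> N" using FL[OF 3] NCL by blast
      then show ?thesis using 3 by simp
    next
      case 4 then show ?thesis using FX[OF 4 i] XN by auto
    qed
  qed
  have R3: "\<And>i. i < n \<Longrightarrow> F i \<in> C \<longleftrightarrow> 1 \<le> i \<and> i \<le> k"
  proof -
    fix i assume i: "i < n"
    consider "i = 0" | "1 \<le> i" "i \<le> k" | "k < i" "i \<le> D" | "D < i" by linarith
    then show "F i \<in> C \<longleftrightarrow> 1 \<le> i \<and> i \<le> k"
    proof cases
      case 1 then show ?thesis using F0 hN NCL by auto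
    next
      case 2 then show ?thesis using FC[OF 2] by blast
    next
      case 3 then have "F i \<notin> C" using FL[OF 3] CLd by blast
      then show ?thesis using 3 by simp
    next
      case 4 then have "F i \<notin> C" using FX[OF 4 i] XN NCL by blast
      then show ?thesis using 4 kD by simp
    qed
  qed
  have R4: "\<And>i. 1 \<le> i \<Longrightarrow> i \<le> k \<Longrightarrow> x (F i) = F (i + D)"
  proof -
    fix i assume i: "1 \<le> i" "i \<le> k"
    have "D < i + D" "i + D < n" using i kD by auto
    then show "x (F i) = F (i + D)" using FX[of "i + D"] by simp
  qed
  have Fl: "\<And>i. i < n \<Longrightarrow> F i \<in> V" using Fimg by blast
  have edge: "\<And>i j. i < n \<Longrightarrow> j < n \<Longrightarrow> {F i, F j} \<in> E \<longleftrightarrow> {i, j} \<in> T_nD_E n D"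
  proof -
    fix i j assume i: "i < n" and j: "j < n"
    have Fj: "\<And>a. a < n \<Longrightarrow> F j = F a \<longleftrightarrow> j = a" using Finj j unfolding inj_on_def by blast
    have Fi: "\<And>a. a < n \<Longrightarrow> F i = F a \<longleftrightarrow> i = a" using Finj i unfolding inj_on_def by blast
    have "{F i, F j} \<in> E \<longleftrightarrow> (F i = h \<and> F j \<in> N) \<or> (F j = h \<and> F i \<in> N) \<or> (F i \<in> C \<and> F j = x (F i)) \<or> (F j \<in> C \<and> F i = x (F j))"
      using Echar Eback by blast
    also have "\<dots> \<longleftrightarrow> (i = 0 \<and> 1 \<le> j \<and> j \<le> D) \<or> (j = 0 \<and> 1 \<le> i \<and> i \<le> D)
        \<or> (1 \<le> i \<and> i \<le> k \<and> j = i + D) \<or> (1 \<le> j \<and> j \<le> k \<and> i = j + D)"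
    proof -
      have a: "(F i \<in> C \<and> F j = x (F i)) \<longleftrightarrow> (1 \<le> i \<and> i \<le> k \<and> j = i + D)"
      proof
        assume "F i \<in> C \<and> F j = x (F i)"
        then have "1 \<le> i \<and> i \<le> k" "F j = F (i + D)" using R3[OF i] R4 by auto
        moreover have "i + D < n" using calculation kD by simp
        ultimately show "1 \<le> i \<and> i \<le> k \<and> j = i + D" using Fj by blast
      next
        assume "1 \<le> i \<and> i \<le> k \<and> j = i + D"
        then show "F i \<in> C \<and> F j = x (F i)" using R3[OF i] R4 by auto
      qed
      have b: "(F j \<in> C \<and> F i = x (F j)) \<longleftrightarrow> (1 \<le> j \<and> j \<le> k \<and> i = j + D)"
      proof
        assume "F j \<in> C \<and> F i = x (F j)"
        then have "1 \<le> j \<and> j \<le> k" "F i = F (j + D)" using R3[OF j] R4 by auto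
        moreover have "j + D < n" using calculation kD by simp
        ultimately show "1 \<le> j \<and> j \<le> k \<and> i = j + D" using Fi by blast
      next
        assume "1 \<le> j \<and> j \<le> k \<and> i = j + D"
        then show "F j \<in> C \<and> F i = x (F j)" using R3[OF j] R4 by auto
      qed
      show ?thesis using a b R1[OF i] R1[OF j] R2[OF i] R2[OF j] by blast
    qed
    also have "\<dots> \<longleftrightarrow> {i, j} \<in> T_nD_E n D" unfolding T_edge_iff using i j kD by auto
    finally show "{F i, F j} \<in> E \<longleftrightarrow> {i, j} \<in> T_nD_E n D" .
  qed
  define f where "f = inv_into {..<n} F"
  have fbij: "bij_betw f V {..<n}" unfolding f_def by (rule bij_betw_inv_into[OF Fbij])
  have Ff: "\<And>v. v \<in> V \<Longrightarrow> F (f v) = v" unfolding f_def using bij_betw_inv_into_right[OF Fbij] by simp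
  have fl: "\<And>v. v \<in> V \<Longrightarrow> f v < n" using fbij unfolding bij_betw_def by auto
  have "\<forall>u\<in>V. \<forall>v\<in>V. {u, v} \<in> E \<longleftrightarrow> {f u, f v} \<in> T_nD_E n D"
  proof (intro ballI)
    fix u v assume u: "u \<in> V" and v: "v \<in> V"
    have "{u, v} \<in> E \<longleftrightarrow> {F (f u), F (f v)} \<in> E" using Ff u v by simp
    also have "\<dots> \<longleftrightarrow> {f u, f v} \<in> T_nD_E n D" using edge fl u v by blast
    finally show "{u, v} \<in> E \<longleftrightarrow> {f u, f v} \<in> T_nD_E n D" .
  qed
  then show ?thesis unfolding graph_iso_def T_nD_V_def using fbij by blast
qed

theorem theorem1p1:
  fixes V :: "'a set" and E :: "'a set set" and n D :: nat
  assumes "is_tree V E" and "card V = n" and "n \<ge> 7"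
    and "3 \<le> D" and "D \<le> n - 2" and "max_degree V E = D"
  shows "(D \<le> (n - 1) div 2 \<longrightarrow>
            sombor V E \<ge> real D * sqrt ((real D)\<^sup>2 + 4) + sqrt 8 * (real n - 2 * real D - 1)
                          + sqrt 5 * real D
          \<and> (sombor V E = real D * sqrt ((real D)\<^sup>2 + 4) + sqrt 8 * (real n - 2 * real D - 1)
                          + sqrt 5 * real D
               \<longleftrightarrow> spider_long_legs V E D))
       \<and> ((n - 1) div 2 < D \<longrightarrow>
            sombor V E \<ge> (real n - real D - 1) * sqrt ((real D)\<^sup>2 + 4)
                          + (2 * real D - real n + 1) * sqrt ((real D)\<^sup>2 + 1)
                          + sqrt 5 * (real n - real D - 1)
          \<and> (sombor V E = (real n - real D - 1) * sqrt ((real D)\<^sup>2 + 4)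
                          + (2 * real D - real n + 1) * sqrt ((real D)\<^sup>2 + 1)
                          + sqrt 5 * (real n - real D - 1)
               \<longleftrightarrow> graph_iso V E (T_nD_V n D) (T_nD_E n D)))"
proof -
  note t = assms(1) and c = assms(2) and n7 = assms(3) and D3 = assms(4) and Dn = assms(5) and md = assms(6)
  have s: "simple_graph V E" using t tree_simple by blast
  have fV: "finite V" using sg_finV[OF s] .
  have Vne: "V \<noteq> {}" using t unfolding is_tree_def by simp
  have "Max (degree E ` V) \<in> degree E ` V" using fV Vne by simp
  then obtain h where h: "h \<in> V" "degree E h = D" using md unfolding max_degree_def by auto
  have c3: "card V \<ge> 3" using c n7 by simp
  define B1 where "B1 = real D * sqrt ((real D)\<^sup>2 + 4) + sqrt 8 * (real n - 2 * real D - 1) + sqrt 5 * real D"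
  define ep where "ep = sqrt ((real D)\<^sup>2 + 1) - sqrt ((real D)\<^sup>2 + 4) + 2 * sqrt 2 - sqrt 5"
  define G where "G = (\<Sum>v\<in>V - {h}. gp V E h v)"
  define L where "L = leafnb V E h"
  have ep0: "ep > 0" using eps_pos[of "real D"] D3 unfolding ep_def by simp
  have G0: "G \<ge> 0" unfolding G_def using gp_props(1)[OF t c3] by (intro sum_nonneg) auto
  have Geq: "G = 0 \<longleftrightarrow> (\<forall>v\<in>V-{h}. degree E v \<le> 2)"
  proof -
    have "G = 0 \<longleftrightarrow> (\<forall>v\<in>V-{h}. gp V E h v = 0)" unfolding G_def
      using fV gp_props(1)[OF t c3] by (intro sum_nonneg_eq_0_iff) auto
    also have "\<dots> \<longleftrightarrow> (\<forall>v\<in>V-{h}. degree E v \<le> 2)" using gp_props(2)[OF t c3] by auto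
    finally show ?thesis .
  qed
  have so: "sombor V E = B1 + real L * ep + G"
    using charging[OF t c _ h(1) h(2)] n7 unfolding B1_def ep_def G_def L_def by simp
  have D2: "D + 2 \<le> n" using Dn n7 by simp
  show ?thesis
  proof (intro conjI impI)
    assume "D \<le> (n - 1) div 2"
    have "real L * ep \<ge> 0" using ep0 by simp
    then show "sombor V E \<ge> real D * sqrt ((real D)\<^sup>2 + 4) + sqrt 8 * (real n - 2 * real D - 1) + sqrt 5 * real D"
      using so G0 unfolding B1_def by simp
    have "sombor V E = B1 \<longleftrightarrow> (L = 0 \<and> G = 0)"
    proof
      assume "sombor V E = B1"
      then have "real L * ep + G = 0" using so by simp
      moreover have "real L * ep \<ge> 0" using ep0 by simp
      ultimately have "real L * ep = 0" "G = 0" using G0 by linarith+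
      then show "L = 0 \<and> G = 0" using ep0 by simp
    qed (use so in simp)
    also have "\<dots> \<longleftrightarrow> spider_long_legs V E D" using spider_iff[OF t c3 h D3] Geq unfolding L_def by simp
    finally show "sombor V E = real D * sqrt ((real D)\<^sup>2 + 4) + sqrt 8 * (real n - 2 * real D - 1) + sqrt 5 * real D
         \<longleftrightarrow> spider_long_legs V E D" unfolding B1_def .
  next
    assume a: "(n - 1) div 2 < D"
    then have n2: "n \<le> 2 * D + 1" by linarith
    have Lb: "D + D \<le> n - 1 + L" using leafnb_bound(2)[OF t c3 h(1)] h c unfolding L_def by simp
    define m where "m = 2 * D + 1 - n"
    have mL: "m \<le> L" using Lb n7 unfolding m_def by linarith
    have rm: "real m = 2 * real D - real n + 1" using n2 unfolding m_def by simp
    define B2 where "B2 = (real n - real D - 1) * sqrt ((real D)\<^sup>2 + 4)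
                          + (2 * real D - real n + 1) * sqrt ((real D)\<^sup>2 + 1)
                          + sqrt 5 * (real n - real D - 1)"
    have B2e: "B2 = B1 + real m * ep" unfolding B2_def B1_def ep_def rm sqrt8 by (simp add: algebra_simps)
    have so2: "sombor V E = B2 + (real L - real m) * ep + G" using so B2e by (simp add: algebra_simps)
    have pos: "(real L - real m) * ep \<ge> 0" using mL ep0 by simp
    then show "sombor V E \<ge> B2" using so2 G0 by simp
    have "sombor V E = B2 \<longleftrightarrow> (L = m \<and> G = 0)"
    proof
      assume "sombor V E = B2"
      then have "(real L - real m) * ep + G = 0" using so2 by simp
      then have "(real L - real m) * ep = 0" "G = 0" using G0 pos by linarith+
      then show "L = m \<and> G = 0" using ep0 by simp
    qed (use so2 in simp)
    also have "\<dots> \<longleftrightarrow> graph_iso V E (T_nD_V n D) (T_nD_E n D)"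
    proof
      assume "L = m \<and> G = 0"
      then show "graph_iso V E (T_nD_V n D) (T_nD_E n D)"
        using struct_iso[OF t c h D3 D2 n2] Geq unfolding L_def m_def by simp
    next
      assume "graph_iso V E (T_nD_V n D) (T_nD_E n D)"
      then show "L = m \<and> G = 0" using iso_struct[OF s _ h D3 D2 n2] Geq unfolding L_def m_def by simp
    qed
    finally show "sombor V E = B2 \<longleftrightarrow> graph_iso V E (T_nD_V n D) (T_nD_E n D)" .
  qed
qed

end
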